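(* Let $A\in\mathbb{C}^{n\times n}$ be positive definite (i.e. $A+A^*$ is Hermitian positive definite), let $C\in\mathbb{C}^{m\times m}$ be positive semidefinite (i.e. $C+C^*$ is Hermitian positive semidefinite), let $B\in\mathbb{C}^{m\times n}$ with $m\le n$, and let $$\mathcal{A}=\begin{bmatrix}A&B^*\\-B&C\end{bmatrix}$$ be singular, with linear system $\mathcal{A}u=b$. Write $A=A_P+A_S$ with $A_P$ positive definite and $A_S$ skew-Hermitian, $C=C_P+C_S$ with $C_P$ positive semidefinite and $C_S$ skew-Hermitian, and $B=B_P+B_S$ an arbitrary splitting. Let $P_\alpha\in\mathbb{C}^{n\times n}$ and $P_\beta\in\mathbb{C}^{m\times m}$ be Hermitian positive definite, and set $$\mathcal{P}=\begin{bmatrix}A_P&B_P^*\\-B_P&C_P\end{bmatrix},\quad \mathcal{S}=\begin{bmatrix}A_S&B_S^*\\-B_S&C_S\end{bmatrix},\quad \Sigma=\begin{bmatrix}P_\alpha&0\\0&P_\beta\end{bmatrix},$$ $$\Gamma_{\mathrm{EPSS}}=(\Sigma+\mathcal{S})^{-1}(\Sigma-\mathcal{P})(\Sigma+\mathcal{P})^{-1}(\Sigma-\mathcal{S}).$$ Suppose that for every $\lambda\in\sigma(\Gamma_{\mathrm{EPSS}})$ with $|\lambda|=1$ and $\lambda\neq 1$, and for every nonzero $r\in \mathrm{null}(C+C^* )$, $$r^*\big(P_\beta-B_SP_\alpha^{-1}B_P^*+C_SP_\beta^{-1}C_P\big)r\neq\frac{1+\lambda}{1-\lambda}\,r^*Cr.$$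 Then the EPSS iteration $u^{k+1}=\Gamma_{\mathrm{EPSS}}u^k+c$, with $c=2(\Sigma+\mathcal{S})^{-1}\Sigma(\Sigma+\mathcal{P})^{-1}b$, is semi-convergent, i.e. it converges to a solution of $\mathcal{A}u=b$ for every initial guess $u^0$.
   Context: The EPSS iteration is equivalently the two-step scheme $(\Sigma+\mathcal{P})u^{k+1/2}=(\Sigma-\mathcal{S})u^k+b$, $(\Sigma+\mathcal{S})u^{k+1}=(\Sigma-\mathcal{P})u^{k+1/2}+b$. $\sigma(\cdot)$ denotes the spectrum and $\mathrm{null}(\cdot)$ the null space. An iteration for a singular system is called semi-convergent if it converges to a solution of the system for any initial guess; the system $\mathcal{A}u=b$ is understood to be consistent (solvable). *)

theory Defs
  imports "Jordan_Normal_Form.Spectral_Radius" "Jordan_Normal_Form.Gauss_Jordan_Elimination"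
    "Jordan_Normal_Form.Schur_Decomposition"
begin

(* Hermitian positive definite / semidefinite n x n complex matrices *)
definition hpd_mat :: "nat \<Rightarrow> complex mat \<Rightarrow> bool" where
  "hpd_mat n H \<longleftrightarrow> H \<in> carrier_mat n n \<and> mat_adjoint H = H \<and>
     (\<forall>x \<in> carrier_vec n. x \<noteq> 0\<^sub>v n \<longrightarrow> Re ((H *\<^sub>v x) \<bullet>c x) > 0)"

definition hpsd_mat :: "nat \<Rightarrow> complex mat \<Rightarrow> bool" where
  "hpsd_mat n H \<longleftrightarrow> H \<in> carrier_mat n n \<and> mat_adjoint H = H \<and>
     (\<forall>x \<in> carrier_vec n. Re ((H *\<^sub>v x) \<bullet>c x) \<ge> 0)"

(* paper's convention: M positive (semi)definite iff M + M^* is Hermitian positive (semi)definite *)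
definition pd_mat :: "nat \<Rightarrow> complex mat \<Rightarrow> bool" where
  "pd_mat n M \<longleftrightarrow> M \<in> carrier_mat n n \<and> hpd_mat n (M + mat_adjoint M)"

definition psd_mat :: "nat \<Rightarrow> complex mat \<Rightarrow> bool" where
  "psd_mat n M \<longleftrightarrow> M \<in> carrier_mat n n \<and> hpsd_mat n (M + mat_adjoint M)"

definition skew_herm_mat :: "nat \<Rightarrow> complex mat \<Rightarrow> bool" where
  "skew_herm_mat n M \<longleftrightarrow> M \<in> carrier_mat n n \<and> mat_adjoint M = - M"

(* matrix inverse (of an invertible square matrix) *)
definition minv :: "complex mat \<Rightarrow> complex mat" where
  "minv M = the (mat_inverse M)"

(* k-th iterate of u^{k+1} = G u^k + c starting at u0 *)
definition lin_iter :: "complex mat \<Rightarrow> complex vec \<Rightarrow> complex vec \<Rightarrow> nat \<Rightarrow> complex vec" where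
  "lin_iter G c u0 k = ((\<lambda>u. G *\<^sub>v u + c) ^^ k) u0"

end

theory Submission
  imports Defs
begin

lemma adj_carrier[simp]: "(A::complex mat) \<in> carrier_mat nr nc \<Longrightarrow> mat_adjoint A \<in> carrier_mat nc nr"
  unfolding mat_adjoint_def by (auto simp: mat_of_rows_def)

lemma adj_dims[simp]: "dim_row (mat_adjoint (A::complex mat)) = dim_col A" "dim_col (mat_adjoint A) = dim_row A"
  unfolding mat_adjoint_def by (auto simp: mat_of_rows_def)

lemma adj_index[simp]: "i < dim_col (A::complex mat) \<Longrightarrow> j < dim_row A \<Longrightarrow> mat_adjoint A $$ (i,j) = cnj (A $$ (j,i))"
  unfolding mat_adjoint_def by (auto simp: mat_of_rows_def)

lemma adj_move: assumes A: "(A::complex mat) \<in> carrier_mat nr nc" and x: "x \<in> carrier_vec nc" and y: "y \<in> carrier_vec nr"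
  shows "(A *\<^sub>v x) \<bullet>c y = x \<bullet>c (mat_adjoint A *\<^sub>v y)"
proof -
  have "(A *\<^sub>v x) \<bullet>c y = (\<Sum>i<nr. (\<Sum>j<nc. A $$ (i,j) * x $ j) * cnj (y $ i))"
    using A x y by (auto simp: scalar_prod_def mult_mat_vec_def row_def atLeast0LessThan intro!: sum.cong)
  also have "\<dots> = (\<Sum>j<nc. x $ j * cnj (\<Sum>i<nr. cnj (A $$ (i,j)) * y $ i))"
    unfolding cnj_sum sum_distrib_left sum_distrib_right by (subst sum.swap) (simp add: mult_ac)
  also have "\<dots> = x \<bullet>c (mat_adjoint A *\<^sub>v y)"
    using A x y by (auto simp: scalar_prod_def mult_mat_vec_def row_def atLeast0LessThan intro!: sum.cong)
  finally show ?thesis .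
qed

lemma cip_sym: assumes "(x::complex vec) \<in> carrier_vec n" "y \<in> carrier_vec n"
  shows "x \<bullet>c y = cnj (y \<bullet>c x)"
  using assms by (auto simp: scalar_prod_def atLeast0LessThan mult.commute intro!: sum.cong)

lemma adj_adj[simp]: "mat_adjoint (mat_adjoint (A::complex mat)) = A"
  by (rule eq_matI) auto

lemma adj_add: "(A::complex mat) \<in> carrier_mat nr nc \<Longrightarrow> B \<in> carrier_mat nr nc \<Longrightarrow> mat_adjoint (A + B) = mat_adjoint A + mat_adjoint B"
  by (rule eq_matI) auto

lemma adj_minus: "(A::complex mat) \<in> carrier_mat nr nc \<Longrightarrow> B \<in> carrier_mat nr nc \<Longrightarrow> mat_adjoint (A - B) = mat_adjoint A - mat_adjoint B"
  by (rule eq_matI) auto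

lemma adj_uminus: "mat_adjoint (- (A::complex mat)) = - mat_adjoint A"
  by (rule eq_matI) auto

lemma adj_zero[simp]: "mat_adjoint (0\<^sub>m nr nc :: complex mat) = 0\<^sub>m nc nr"
  by (rule eq_matI) auto

lemma adj_four_block: assumes "(A::complex mat) \<in> carrier_mat n1 m1" "B \<in> carrier_mat n1 m2" "C \<in> carrier_mat n2 m1" "D \<in> carrier_mat n2 m2"
  shows "mat_adjoint (four_block_mat A B C D) = four_block_mat (mat_adjoint A) (mat_adjoint C) (mat_adjoint B) (mat_adjoint D)"
  using assms by (intro eq_matI) auto

lemma cip_add_left: "(a::complex vec) \<in> carrier_vec n \<Longrightarrow> b \<in> carrier_vec n \<Longrightarrow> c \<in> carrier_vec n \<Longrightarrow>
  (a + b) \<bullet>c c = a \<bullet>c c + b \<bullet>c c"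
  by (auto simp: scalar_prod_def sum.distrib algebra_simps)
lemma cip_add_right: "(a::complex vec) \<in> carrier_vec n \<Longrightarrow> b \<in> carrier_vec n \<Longrightarrow> c \<in> carrier_vec n \<Longrightarrow>
  a \<bullet>c (b + c) = a \<bullet>c b + a \<bullet>c c"
  by (auto simp: scalar_prod_def sum.distrib algebra_simps)
lemma cip_minus_left: "(a::complex vec) \<in> carrier_vec n \<Longrightarrow> b \<in> carrier_vec n \<Longrightarrow> c \<in> carrier_vec n \<Longrightarrow>
  (a - b) \<bullet>c c = a \<bullet>c c - b \<bullet>c c"
  by (auto simp: scalar_prod_def sum_subtractf algebra_simps)
lemma cip_minus_right: "(a::complex vec) \<in> carrier_vec n \<Longrightarrow> b \<in> carrier_vec n \<Longrightarrow> c \<in> carrier_vec n \<Longrightarrow>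
  a \<bullet>c (b - c) = a \<bullet>c b - a \<bullet>c c"
  by (auto simp: scalar_prod_def sum_subtractf algebra_simps)
lemma cip_smult_left: "(a::complex vec) \<in> carrier_vec n \<Longrightarrow> c \<in> carrier_vec n \<Longrightarrow>
  (k \<cdot>\<^sub>v a) \<bullet>c c = k * (a \<bullet>c c)"
  by (auto simp: scalar_prod_def sum_distrib_left algebra_simps)
lemma cip_smult_right: "(a::complex vec) \<in> carrier_vec n \<Longrightarrow> c \<in> carrier_vec n \<Longrightarrow>
  a \<bullet>c (k \<cdot>\<^sub>v c) = cnj k * (a \<bullet>c c)"
  by (auto simp: scalar_prod_def sum_distrib_left algebra_simps)
lemma cip_zero_left[simp]: "(c::complex vec) \<in> carrier_vec n \<Longrightarrow> 0\<^sub>v n \<bullet>c c = 0"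
  by (auto simp: scalar_prod_def)
lemma cip_zero_right[simp]: "(c::complex vec) \<in> carrier_vec n \<Longrightarrow> c \<bullet>c 0\<^sub>v n = 0"
  by (auto simp: scalar_prod_def)
lemma cip_self_Re: "(c::complex vec) \<in> carrier_vec n \<Longrightarrow> Re (c \<bullet>c c) \<ge> 0"
  using conjugate_square_ge_0_vec[of c] by (auto simp: less_eq_complex_def)
lemma cip_self_real: "(c::complex vec) \<in> carrier_vec n \<Longrightarrow> c \<bullet>c c = of_real (Re (c \<bullet>c c))"
  using conjugate_square_ge_0_vec[of c] by (auto simp: less_eq_complex_def complex_eq_iff)
lemma cip_self_pos: "(c::complex vec) \<in> carrier_vec n \<Longrightarrow> c \<noteq> 0\<^sub>v n \<Longrightarrow> Re (c \<bullet>c c) > 0"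
  using conjugate_square_greater_0_vec[of c n] by (auto simp: less_complex_def)

lemma psd_null: fixes H :: "complex mat"
  assumes H: "H \<in> carrier_mat n n" and herm: "mat_adjoint H = H"
    and psd: "\<forall>x \<in> carrier_vec n. Re ((H *\<^sub>v x) \<bullet>c x) \<ge> 0"
    and y: "y \<in> carrier_vec n" and zero: "Re ((H *\<^sub>v y) \<bullet>c y) = 0"
  shows "H *\<^sub>v y = 0\<^sub>v n"
proof (rule ccontr)
  assume ne: "H *\<^sub>v y \<noteq> 0\<^sub>v n"
  define w where "w = H *\<^sub>v y"
  have w: "w \<in> carrier_vec n" using H y unfolding w_def by auto
  define a where "a = Re (w \<bullet>c w)"
  have a: "a > 0" unfolding a_def using cip_self_pos[OF w] ne unfolding w_def by auto
  define b where "b = Re ((H *\<^sub>v w) \<bullet>c w)"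
  have b: "b \<ge> 0" unfolding b_def using psd w by auto
  have Hw: "H *\<^sub>v w \<in> carrier_vec n" using H w by auto
  have key: "Re ((H *\<^sub>v (y + t \<cdot>\<^sub>v w)) \<bullet>c (y + t \<cdot>\<^sub>v w)) = 2 * t * a + t^2 * b" for t :: real
  proof -
    have e1: "H *\<^sub>v (y + t \<cdot>\<^sub>v w) = w + (complex_of_real t) \<cdot>\<^sub>v (H *\<^sub>v w)"
      using H y w by (simp add: mult_add_distrib_mat_vec[OF H] mult_mat_vec[OF H] w_def)
    have e2: "(H *\<^sub>v w) \<bullet>c y = w \<bullet>c (mat_adjoint H *\<^sub>v y)" by (rule adj_move[OF H w y])
    also have "\<dots> = w \<bullet>c w" using herm w_def by simp
    finally have e2: "(H *\<^sub>v w) \<bullet>c y = w \<bullet>c w" .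
    have "(H *\<^sub>v (y + t \<cdot>\<^sub>v w)) \<bullet>c (y + t \<cdot>\<^sub>v w)
      = w \<bullet>c y + t * (w \<bullet>c w) + t * ((H *\<^sub>v w) \<bullet>c y) + t * t * ((H *\<^sub>v w) \<bullet>c w)"
      unfolding e1 using w y Hw
      by (simp add: cip_add_left[of _ n] cip_add_right[of _ n] cip_smult_left[of _ n] cip_smult_right[of _ n] algebra_simps)
    hence "Re ((H *\<^sub>v (y + t \<cdot>\<^sub>v w)) \<bullet>c (y + t \<cdot>\<^sub>v w)) = Re (w \<bullet>c y) + t * a + t * a + t * t * b"
      unfolding e2 a_def b_def by simp
    thus ?thesis using zero unfolding w_def[symmetric] by (simp add: power2_eq_square)
  qed
  define t where "t = - a / (b + 1)"
  have "0 \<le> 2 * t * a + t^2 * b" using key[of t] psd y w by (metis add_carrier_vec smult_carrier_vec)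
  also have "2 * t * a + t^2 * b = t * (2 * a + t * b)" by (simp add: power2_eq_square algebra_simps)
  also have "\<dots> < 0"
  proof (rule mult_neg_pos)
    show "t < 0" unfolding t_def using a b by (simp add: divide_neg_pos)
    have "- t * b \<le> a" unfolding t_def using a b by (simp add: field_simps)
    thus "0 < 2 * a + t * b" using a by linarith
  qed
  finally show False by simp
qed


lemma minv_props: fixes M :: "complex mat"
  assumes M: "M \<in> carrier_mat n n" and inj: "\<And>v. v \<in> carrier_vec n \<Longrightarrow> M *\<^sub>v v = 0\<^sub>v n \<Longrightarrow> v = 0\<^sub>v n"
  shows "minv M \<in> carrier_mat n n" "M * minv M = 1\<^sub>m n" "minv M * M = 1\<^sub>m n"
proof -
  have "det M \<noteq> 0" using det_0_iff_vec_prod_zero[OF M] inj by auto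
  from det_non_zero_imp_unit[OF M this] have U: "M \<in> Units (ring_mat TYPE(complex) n undefined)" .
  then obtain B where B: "mat_inverse M = Some B" using mat_inverse(1)[OF M, of undefined] U by (cases "mat_inverse M") auto
  from mat_inverse(2)[OF M B] show "minv M \<in> carrier_mat n n" "M * minv M = 1\<^sub>m n" "minv M * M = 1\<^sub>m n"
    unfolding minv_def B by auto
qed

lemma minv_left: fixes M :: "complex mat"
  assumes M: "M \<in> carrier_mat n n" and inj: "\<And>v. v \<in> carrier_vec n \<Longrightarrow> M *\<^sub>v v = 0\<^sub>v n \<Longrightarrow> v = 0\<^sub>v n"
    and x: "x \<in> carrier_vec n"
  shows "minv M *\<^sub>v (M *\<^sub>v x) = x" "M *\<^sub>v (minv M *\<^sub>v x) = x" "minv M *\<^sub>v x \<in> carrier_vec n"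
proof -
  note mp = minv_props[OF M inj]
  show "minv M *\<^sub>v (M *\<^sub>v x) = x" using assoc_mult_mat_vec[OF mp(1) M x, symmetric] mp(3) x by simp
  show "M *\<^sub>v (minv M *\<^sub>v x) = x" using assoc_mult_mat_vec[OF M mp(1) x, symmetric] mp(2) x by simp
  show "minv M *\<^sub>v x \<in> carrier_vec n" using mp(1) x by auto
qed

lemma pos_inj: fixes M :: "complex mat"
  assumes M: "M \<in> carrier_mat n n" and pos: "\<And>z. z \<in> carrier_vec n \<Longrightarrow> z \<noteq> 0\<^sub>v n \<Longrightarrow> Re ((M *\<^sub>v z) \<bullet>c z) > 0"
    and v: "v \<in> carrier_vec n" and z: "M *\<^sub>v v = 0\<^sub>v n"
  shows "v = 0\<^sub>v n"
  using pos[OF v] z v by force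

definition pv :: "complex mat \<Rightarrow> complex poly \<Rightarrow> complex vec \<Rightarrow> complex vec" where
  "pv G p x = foldr (\<lambda>a acc. a \<cdot>\<^sub>v x + G *\<^sub>v acc) (coeffs p) (0\<^sub>v (dim_row G))"

definition itv :: "complex mat \<Rightarrow> nat \<Rightarrow> complex vec \<Rightarrow> complex vec" where
  "itv G k x = ((\<lambda>y. G *\<^sub>v y) ^^ k) x"

lemma rec_to_zero: fixes s b :: "nat \<Rightarrow> complex"
  assumes c: "cmod c < 1" and rec: "\<And>k. s (Suc k) = c * s k + b k" and b: "b \<longlonglongrightarrow> 0"
  shows "s \<longlonglongrightarrow> 0"
proof (rule LIMSEQ_I)
  fix e :: real assume e: "e > 0"
  define r where "r = cmod c"
  have r: "0 \<le> r" "r < 1" using c unfolding r_def by auto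
  have e2: "e * (1 - r) / 2 > 0" using e r by auto
  from LIMSEQ_D[OF b e2] obtain K where K: "\<And>k. k \<ge> K \<Longrightarrow> cmod (b k) < e * (1 - r) / 2" by auto
  define S where "S = cmod (s K)"
  have bound: "cmod (s (K + j)) \<le> r ^ j * S + e / 2" for j
  proof (induct j)
    case 0 then show ?case using e unfolding S_def by simp
  next
    case (Suc j)
    have "cmod (s (K + Suc j)) \<le> r * cmod (s (K + j)) + cmod (b (K + j))"
      unfolding add_Suc_right rec r_def by (metis norm_mult norm_triangle_ineq)
    also have "\<dots> \<le> r * (r ^ j * S + e / 2) + e * (1 - r) / 2"
      using K[of "K + j"] Suc r by (intro add_mono mult_left_mono) auto
    also have "\<dots> = r ^ Suc j * S + e / 2" by (simp add: field_simps)
    finally show ?case .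
  qed
  have "(\<lambda>j. r ^ j * S) \<longlonglongrightarrow> 0" using r by (intro tendsto_mult_left_zero LIMSEQ_power_zero) auto
  from LIMSEQ_D[OF this, of "e / 2"] e obtain K2 where K2: "\<And>j. j \<ge> K2 \<Longrightarrow> \<bar>r ^ j * S\<bar> < e / 2" by auto
  show "\<exists>no. \<forall>n\<ge>no. norm (s n - 0) < e"
  proof (intro exI allI impI)
    fix n assume n: "n \<ge> K + K2"
    define j where "j = n - K"
    have j: "n = K + j" "j \<ge> K2" using n unfolding j_def by auto
    show "norm (s n - 0) < e" using bound[of j] K2[OF j(2)] unfolding j(1) by auto
  qed
qed

context fixes G :: "complex mat" and N :: nat assumes G: "G \<in> carrier_mat N N"
begin

lemma G0[simp]: "G *\<^sub>v 0\<^sub>v N = 0\<^sub>v N"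
  using G by (auto intro!: eq_vecI)

lemma pv_0[simp]: "pv G 0 x = 0\<^sub>v N"
  unfolding pv_def using G by auto

lemma pv_pCons: assumes x: "x \<in> carrier_vec N"
  shows "pv G (pCons a p) x = a \<cdot>\<^sub>v x + G *\<^sub>v pv G p x"
proof (cases "a = 0 \<and> p = 0")
  case True
  then show ?thesis using G x by (auto intro!: eq_vecI)
next
  case False
  then have "coeffs (pCons a p) = a # coeffs p" by (auto simp: cCons_def)
  then show ?thesis unfolding pv_def by simp
qed

lemma pv_carrier[simp]: assumes x: "x \<in> carrier_vec N" shows "pv G p x \<in> carrier_vec N"
  by (induct p rule: pCons_induct) (use G x in \<open>auto simp: pv_pCons\<close>)

lemma pv_add: assumes x: "x \<in> carrier_vec N" shows "pv G (p + q) x = pv G p x + pv G q x"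
proof (induct p arbitrary: q rule: pCons_induct)
  case 0 then show ?case using x by auto
next
  case (pCons a p)
  obtain b q' where q: "q = pCons b q'" by (cases q) auto
  show ?case unfolding q add_pCons pv_pCons[OF x] pCons(2)
    using G x by (subst mult_add_distrib_mat_vec[OF G], auto intro!: eq_vecI simp: algebra_simps)
qed

lemma pv_smult: assumes x: "x \<in> carrier_vec N" shows "pv G (Polynomial.smult c p) x = c \<cdot>\<^sub>v pv G p x"
proof (induct p rule: pCons_induct)
  case 0 then show ?case using x by auto
next
  case (pCons a p)
  show ?case unfolding smult_pCons pv_pCons[OF x] pCons(2)
    using G x by (subst mult_mat_vec[OF G], auto intro!: eq_vecI simp: algebra_simps)
qed

lemma pv_vadd: assumes x: "x \<in> carrier_vec N" and y: "y \<in> carrier_vec N"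
  shows "pv G p (x + y) = pv G p x + pv G p y"
proof (induct p rule: pCons_induct)
  case 0 then show ?case using x by auto
next
  case (pCons a p)
  show ?case unfolding pv_pCons[OF x] pv_pCons[OF y] pv_pCons[OF add_carrier_vec[OF x y]] pCons(2)
    using G x y by (subst mult_add_distrib_mat_vec[OF G], auto intro!: eq_vecI simp: algebra_simps)
qed

lemma pv_vsmult: assumes x: "x \<in> carrier_vec N"
  shows "pv G p (c \<cdot>\<^sub>v x) = c \<cdot>\<^sub>v pv G p x"
proof (induct p rule: pCons_induct)
  case 0 then show ?case using x by auto
next
  case (pCons a p)
  show ?case unfolding pv_pCons[OF x] pv_pCons[OF smult_carrier_vec[THEN iffD2, OF x]] pCons(2)
    using G x by (subst mult_mat_vec[OF G], auto intro!: eq_vecI simp: algebra_simps)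
qed

lemma pv_G: assumes x: "x \<in> carrier_vec N"
  shows "pv G p (G *\<^sub>v x) = G *\<^sub>v pv G p x"
proof (induct p rule: pCons_induct)
  case 0 then show ?case using x G by auto
next
  case (pCons a p)
  have Gx: "G *\<^sub>v x \<in> carrier_vec N" using G x by auto
  show ?case unfolding pv_pCons[OF x] pv_pCons[OF Gx] pCons(2)
    using G x by (simp add: mult_add_distrib_mat_vec[OF G] mult_mat_vec[OF G])
qed

lemma pv_mult: assumes x: "x \<in> carrier_vec N"
  shows "pv G (p * q) x = pv G p (pv G q x)"
proof (induct p rule: pCons_induct)
  case 0 then show ?case using x by auto
next
  case (pCons a p)
  have c: "pv G q x \<in> carrier_vec N" using x by simp
  have "pv G (pCons a p * q) x = pv G (Polynomial.smult a q + pCons 0 (p * q)) x" by simp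
  also have "\<dots> = a \<cdot>\<^sub>v pv G q x + G *\<^sub>v pv G p (pv G q x)"
    unfolding pv_add[OF x] pv_smult[OF x] pv_pCons[OF x] pCons(2) using G x c by (auto intro!: eq_vecI)
  also have "\<dots> = pv G (pCons a p) (pv G q x)" unfolding pv_pCons[OF c] ..
  finally show ?case .
qed

lemma pv_comm: assumes x: "x \<in> carrier_vec N"
  shows "pv G p (pv G q x) = pv G q (pv G p x)"
  using pv_mult[OF x, of p q] pv_mult[OF x, of q p] by (simp add: mult.commute)

lemma pv_lin: assumes x: "x \<in> carrier_vec N"
  shows "pv G [:-a, 1:] x = G *\<^sub>v x - a \<cdot>\<^sub>v x"
  unfolding pv_pCons[OF x] using G x by (auto intro!: eq_vecI simp: pv_pCons[OF x])

lemma pv_fixed: assumes x: "x \<in> carrier_vec N" and fx: "G *\<^sub>v x = x"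
  shows "pv G p x = poly p 1 \<cdot>\<^sub>v x"
proof (induct p rule: pCons_induct)
  case 0 then show ?case using x by auto
next
  case (pCons a p)
  show ?case unfolding pv_pCons[OF x] pCons(2) mult_mat_vec[OF G x] fx
    using x by (auto intro!: eq_vecI simp: algebra_simps)
qed


lemma itv_0[simp]: "itv G 0 x = x" unfolding itv_def by simp
lemma itv_Suc: "itv G (Suc k) x = G *\<^sub>v itv G k x" unfolding itv_def by simp
lemma itv_Suc': "itv G (Suc k) x = itv G k (G *\<^sub>v x)" unfolding itv_def by (simp add: funpow_Suc_right del: funpow.simps)
lemma itv_carrier[simp]: "x \<in> carrier_vec N \<Longrightarrow> itv G k x \<in> carrier_vec N"
  by (induct k) (use G in \<open>auto simp: itv_Suc\<close>)
lemma itv_add: "x \<in> carrier_vec N \<Longrightarrow> y \<in> carrier_vec N \<Longrightarrow> itv G k (x + y) = itv G k x + itv G k y"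
  by (induct k) (use G in \<open>auto simp: itv_Suc mult_add_distrib_mat_vec[OF G]\<close>)
lemma itv_smult: "x \<in> carrier_vec N \<Longrightarrow> itv G k (c \<cdot>\<^sub>v x) = c \<cdot>\<^sub>v itv G k x"
  by (induct k) (use G in \<open>auto simp: itv_Suc mult_mat_vec[OF G]\<close>)
lemma itv_fixed: "x \<in> carrier_vec N \<Longrightarrow> G *\<^sub>v x = x \<Longrightarrow> itv G k x = x"
  by (induct k) (auto simp: itv_Suc)

lemma pv_sum: assumes x: "x \<in> carrier_vec N"
  shows "(\<forall>j\<ge>d. coeff p j = 0) \<Longrightarrow> i < N \<Longrightarrow> pv G p x $ i = (\<Sum>j<d. coeff p j * itv G j x $ i)"
proof (induct p arbitrary: d i rule: pCons_induct)
  case 0 then show ?case by simp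
next
  case (pCons a p)
  obtain d' where d: "d = Suc d'"
  proof (cases d)
    case 0
    with pCons(3) have "\<forall>j. coeff (pCons a p) j = 0" by auto
    then have z: "coeff (pCons a p) j = 0" for j by blast
    have "a = 0" using z[of 0] by simp
    moreover have "p = 0" by (rule poly_eqI) (use z[of "Suc _"] in simp)
    ultimately show ?thesis using pCons(1) by simp
  qed
  have cp: "\<forall>j\<ge>d'. coeff p j = 0" using pCons(3) d by (auto simp: coeff_pCons split: nat.splits)
  have "pv G (pCons a p) x $ i = a * x $ i + row G i \<bullet> pv G p x"
    using pCons(4) G x by (simp add: pv_pCons[OF x])
  also have "row G i \<bullet> pv G p x = (\<Sum>k<N. G $$ (i,k) * (\<Sum>j<d'. coeff p j * itv G j x $ k))"
    using G x pCons(4) pCons(2)[OF cp] by (auto simp: scalar_prod_def atLeast0LessThan intro!: sum.cong)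
  also have "\<dots> = (\<Sum>j<d'. coeff p j * itv G (Suc j) x $ i)"
    unfolding itv_Suc using G x pCons(4)
    by (simp add: scalar_prod_def atLeast0LessThan sum_distrib_left sum_distrib_right mult_ac, subst sum.swap,
        auto simp: carrier_vecD[OF itv_carrier[OF x]] intro!: sum.cong)
  also have "a * x $ i + \<dots> = (\<Sum>j<d. coeff (pCons a p) j * itv G j x $ i)"
    unfolding d sum.lessThan_Suc_shift by simp
  finally show ?case .
qed

lemma krylov: assumes x: "x \<in> carrier_vec N" shows "\<exists>p. p \<noteq> 0 \<and> pv G p x = 0\<^sub>v N"
proof -
  define c where "c = (\<lambda>i. vec (Suc N) (\<lambda>j. itv G j x $ i))"
  define K where "K = mat\<^sub>r (Suc N) (Suc N) (\<lambda>i. if i = N then 0\<^sub>v (Suc N) else c i)"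
  have "det K = 0" unfolding K_def by (rule det_row_0, auto simp: c_def)
  moreover have K: "K \<in> carrier_mat (Suc N) (Suc N)" unfolding K_def by auto
  ultimately obtain v where v: "v \<in> carrier_vec (Suc N)" "v \<noteq> 0\<^sub>v (Suc N)" "K *\<^sub>v v = 0\<^sub>v (Suc N)"
    using det_0_iff_vec_prod_zero[OF K] by auto
  define p where "p = Poly (list_of_vec v)"
  have cp: "coeff p j = (if j < Suc N then v $ j else 0)" for j
    unfolding p_def using v(1) by (auto simp: nth_default_def)
  have "p \<noteq> 0"
  proof
    assume "p = 0"
    then have "v $ j = 0" if "j < Suc N" for j using cp[of j] that by auto
    then show False using v by (auto intro!: eq_vecI)
  qed
  moreover have "pv G p x = 0\<^sub>v N"
  proof (rule eq_vecI)
    fix i assume i: "i < dim_vec (0\<^sub>v N :: complex vec)"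
    then have i: "i < N" by simp
    have "pv G p x $ i = (\<Sum>j<Suc N. coeff p j * itv G j x $ i)"
      by (rule pv_sum[OF x _ i]) (auto simp: cp)
    also have "\<dots> = (K *\<^sub>v v) $ i"
      using i v(1) by (auto simp: K_def c_def cp scalar_prod_def atLeast0LessThan mult.commute intro!: sum.cong)
    also have "\<dots> = 0" using v(3) i by simp
    finally show "pv G p x $ i = 0\<^sub>v N $ i" using i by simp
  qed (use x in auto)
  ultimately show ?thesis by blast
qed


lemma pv_1[simp]: "x \<in> carrier_vec N \<Longrightarrow> pv G 1 x = x"
  using pv_pCons[of x 1 0] by (simp add: one_pCons)

lemma itv_zero[simp]: "itv G k (0\<^sub>v N) = 0\<^sub>v N"
  by (induct k) (auto simp: itv_Suc)

lemma pv_vminus: assumes x: "x \<in> carrier_vec N" and y: "y \<in> carrier_vec N"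
  shows "pv G p (x - y) = pv G p x - pv G p y"
proof -
  have "x - y = x + (-1) \<cdot>\<^sub>v y" using x y by (auto intro!: eq_vecI)
  then show ?thesis using x y by (simp add: pv_vadd pv_vsmult) (auto intro!: eq_vecI)
qed

lemma pv_prod_Cons: assumes x: "x \<in> carrier_vec N"
  shows "pv G (\<Prod>c\<leftarrow>a # cs. [:-c, 1:]) x = pv G (\<Prod>c\<leftarrow>cs. [:-c, 1:]) (G *\<^sub>v x - a \<cdot>\<^sub>v x)"
proof -
  have "pv G (\<Prod>c\<leftarrow>a # cs. [:-c, 1:]) x = pv G ((\<Prod>c\<leftarrow>cs. [:-c, 1:]) * [:-a, 1:]) x"
    by (simp add: mult.commute)
  also have "\<dots> = pv G (\<Prod>c\<leftarrow>cs. [:-c, 1:]) (G *\<^sub>v x - a \<cdot>\<^sub>v x)"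
    unfolding pv_mult[OF x] pv_lin[OF x] ..
  finally show ?thesis .
qed

lemma pv_decay: assumes cs: "\<forall>c\<in>set cs. cmod c < 1"
  shows "y \<in> carrier_vec N \<Longrightarrow> pv G (\<Prod>c\<leftarrow>cs. [:-c, 1:]) y = 0\<^sub>v N \<Longrightarrow> i < N \<Longrightarrow> (\<lambda>k. itv G k y $ i) \<longlonglongrightarrow> 0"
  using cs
proof (induct cs arbitrary: y i)
  case Nil
  then have "y = 0\<^sub>v N" by simp
  then show ?case using Nil by simp
next
  case (Cons c cs)
  define v where "v = G *\<^sub>v y - c \<cdot>\<^sub>v y"
  have v: "v \<in> carrier_vec N" unfolding v_def using G Cons(2) by auto
  have pv: "pv G (\<Prod>c\<leftarrow>cs. [:-c, 1:]) v = 0\<^sub>v N" using Cons(3) pv_prod_Cons[OF Cons(2)] v_def by simp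
  have IH: "(\<lambda>k. itv G k v $ i) \<longlonglongrightarrow> 0" using Cons(1)[OF v pv Cons(4)] Cons(5) by simp
  have Gy: "G *\<^sub>v y = c \<cdot>\<^sub>v y + v" unfolding v_def using G Cons(2) by (auto intro!: eq_vecI)
  have rec: "itv G (Suc k) y $ i = c * itv G k y $ i + itv G k v $ i" for k
  proof -
    have "itv G (Suc k) y = c \<cdot>\<^sub>v itv G k y + itv G k v"
      unfolding itv_Suc' Gy using itv_add[OF smult_carrier_vec[THEN iffD2, OF Cons(2)] v] itv_smult[OF Cons(2)] by simp
    moreover have "dim_vec (itv G k y) = N" "dim_vec (itv G k v) = N" using Cons(2) v by auto
    ultimately show ?thesis using Cons(4) by simp
  qed
  show ?case by (rule rec_to_zero[of c]) (use Cons(5) rec IH in auto)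
qed


lemma pv_filter: assumes ev: "\<And>a. eigenvalue G a \<Longrightarrow> cmod a < 1 \<or> a = 1"
  shows "x \<in> carrier_vec N \<Longrightarrow> pv G (\<Prod>c\<leftarrow>as. [:-c, 1:]) x = 0\<^sub>v N \<Longrightarrow>
    pv G (\<Prod>c\<leftarrow>filter (\<lambda>a. cmod a < 1 \<or> a = 1) as. [:-c, 1:]) x = 0\<^sub>v N"
proof (induct as arbitrary: x)
  case Nil then show ?case by simp
next
  case (Cons a as)
  show ?case
  proof (cases "cmod a < 1 \<or> a = 1")
    case True
    define x' where "x' = G *\<^sub>v x - a \<cdot>\<^sub>v x"
    have x': "x' \<in> carrier_vec N" unfolding x'_def using G Cons(2) by auto
    have "pv G (\<Prod>c\<leftarrow>as. [:-c, 1:]) x' = 0\<^sub>v N" using Cons(3) pv_prod_Cons[OF Cons(2)] x'_def by simp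
    from Cons(1)[OF x' this] show ?thesis using True pv_prod_Cons[OF Cons(2)] x'_def by simp
  next
    case False
    define w where "w = pv G (\<Prod>c\<leftarrow>as. [:-c, 1:]) x"
    have w: "w \<in> carrier_vec N" unfolding w_def using Cons(2) by simp
    have "pv G [:-a, 1:] w = 0\<^sub>v N" using Cons(3) pv_mult[OF Cons(2), of "[:-a, 1:]"] w_def by simp
    then have Gw: "G *\<^sub>v w = a \<cdot>\<^sub>v w" unfolding pv_lin[OF w] using G w by (auto intro!: eq_vecI simp: vec_eq_iff)
    have "w = 0\<^sub>v N"
    proof (rule ccontr)
      assume "w \<noteq> 0\<^sub>v N"
      then have "eigenvalue G a" unfolding eigenvalue_def eigenvector_def using G w Gw by auto
      then show False using ev False by blast
    qed
    from Cons(1)[OF Cons(2)] this w_def show ?thesis using False by simp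
  qed
qed

lemma pv_decomp: assumes bs: "\<forall>a\<in>set bs. cmod a < 1 \<or> a = 1"
  and ss: "\<And>w. w \<in> carrier_vec N \<Longrightarrow> G *\<^sub>v (G *\<^sub>v w - w) = G *\<^sub>v w - w \<Longrightarrow> G *\<^sub>v w = w"
  shows "x \<in> carrier_vec N \<Longrightarrow> pv G (\<Prod>c\<leftarrow>bs. [:-c, 1:]) x = 0\<^sub>v N \<Longrightarrow>
    \<exists>y1 y2 cs. y1 \<in> carrier_vec N \<and> y2 \<in> carrier_vec N \<and> x = y1 + y2 \<and> G *\<^sub>v y1 = y1 \<and>
      (\<forall>c\<in>set cs. cmod c < 1) \<and> pv G (\<Prod>c\<leftarrow>cs. [:-c, 1:]) y2 = 0\<^sub>v N"
  using bs
proof (induct bs arbitrary: x)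
  case Nil
  then show ?case by (intro exI[of _ "0\<^sub>v N"] exI[of _ "[]"]) auto
next
  case (Cons a bs)
  have x: "x \<in> carrier_vec N" by fact
  define v where "v = G *\<^sub>v x - a \<cdot>\<^sub>v x"
  have v: "v \<in> carrier_vec N" unfolding v_def using G x by auto
  have "pv G (\<Prod>c\<leftarrow>bs. [:-c, 1:]) v = 0\<^sub>v N" using Cons(3) pv_prod_Cons[OF x] v_def by simp
  from Cons(1)[OF v this] Cons(4) obtain v1 v2 cs where
    v1: "v1 \<in> carrier_vec N" and v2: "v2 \<in> carrier_vec N" and vv: "v = v1 + v2" and Gv1: "G *\<^sub>v v1 = v1"
    and cs: "\<forall>c\<in>set cs. cmod c < 1" and pv2: "pv G (\<Prod>c\<leftarrow>cs. [:-c, 1:]) v2 = 0\<^sub>v N" by auto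
  have Gx: "G *\<^sub>v x \<in> carrier_vec N" using G x by auto
  have a: "cmod a < 1 \<or> a = 1" using Cons(4) by auto
  show ?case
  proof (cases "a = 1")
    case False
    with a have a1: "cmod a < 1" by auto
    then have a1': "1 - a \<noteq> 0" by auto
    define y1 where "y1 = (1 / (1 - a)) \<cdot>\<^sub>v v1"
    define y2 where "y2 = x - y1"
    have y1: "y1 \<in> carrier_vec N" and y2: "y2 \<in> carrier_vec N" unfolding y1_def y2_def using v1 x by auto
    have Gy1: "G *\<^sub>v y1 = y1" unfolding y1_def mult_mat_vec[OF G v1] Gv1 ..
    have Gy2: "G *\<^sub>v y2 = G *\<^sub>v x - y1" unfolding y2_def mult_minus_distrib_mat_vec[OF G x y1] Gy1 ..
    have "G *\<^sub>v y2 - a \<cdot>\<^sub>v y2 = v2"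
    proof (rule eq_vecI)
      fix i assume i: "i < dim_vec v2"
      then have i: "i < N" using v2 by auto
      have "v $ i = v1 $ i + v2 $ i" using vv i v1 v2 by simp
      moreover have "v $ i = (G *\<^sub>v x) $ i - a * x $ i" unfolding v_def using i x Gx by simp
      moreover have "v1 $ i = (1 - a) * y1 $ i" unfolding y1_def using i v1 a1' by simp
      moreover have "(G *\<^sub>v y2) $ i = (G *\<^sub>v x) $ i - y1 $ i" unfolding Gy2 using i Gx y1 by simp
      moreover have "y2 $ i = x $ i - y1 $ i" unfolding y2_def using i x y1 by simp
      moreover have "(G *\<^sub>v y2 - a \<cdot>\<^sub>v y2) $ i = (G *\<^sub>v y2) $ i - a * y2 $ i" using i G y2 by simp
      ultimately show "(G *\<^sub>v y2 - a \<cdot>\<^sub>v y2) $ i = v2 $ i"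
        by (simp only:) (simp add: algebra_simps)
    qed (use v2 G y2 in auto)
    then have "pv G (\<Prod>c\<leftarrow>a # cs. [:-c, 1:]) y2 = 0\<^sub>v N" using pv_prod_Cons[OF y2] pv2 by simp
    moreover have "x = y1 + y2" unfolding y2_def using x y1 by (auto intro!: eq_vecI)
    ultimately show ?thesis using y1 y2 Gy1 cs a1 by (intro exI[of _ y1] exI[of _ y2] exI[of _ "a # cs"]) auto
  next
    case True
    define Q where "Q = (\<Prod>c\<leftarrow>cs. [:-c, 1:])"
    define q where "q = poly Q 1"
    have q: "q \<noteq> 0" unfolding q_def Q_def poly_prod_list using cs by (auto simp: prod_list_zero_iff)
    define z where "z = pv G Q x"
    have z: "z \<in> carrier_vec N" unfolding z_def using x by simp
    have "G *\<^sub>v z - z = pv G Q v" unfolding z_def v_def True using x Gx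
      by (simp add: pv_vminus pv_G)
    also have "\<dots> = q \<cdot>\<^sub>v v1" unfolding vv pv_vadd[OF v1 v2] pv2[folded Q_def] pv_fixed[OF v1 Gv1] q_def
      using v1 by simp
    finally have Gz: "G *\<^sub>v z - z = q \<cdot>\<^sub>v v1" .
    have "G *\<^sub>v (G *\<^sub>v z - z) = G *\<^sub>v z - z" unfolding Gz mult_mat_vec[OF G v1] Gv1 ..
    from ss[OF z this] have Gz: "G *\<^sub>v z = z" .
    define y1 where "y1 = (1 / q) \<cdot>\<^sub>v z"
    define y2 where "y2 = x - y1"
    have y1: "y1 \<in> carrier_vec N" and y2: "y2 \<in> carrier_vec N" unfolding y1_def y2_def using z x by auto
    have Gy1: "G *\<^sub>v y1 = y1" unfolding y1_def mult_mat_vec[OF G z] Gz ..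
    have "pv G Q y2 = pv G Q x - pv G Q y1" unfolding y2_def by (rule pv_vminus[OF x y1])
    also have "pv G Q y1 = (1 / q) \<cdot>\<^sub>v pv G Q z" unfolding y1_def by (rule pv_vsmult[OF z])
    also have "pv G Q z = q \<cdot>\<^sub>v z" using pv_fixed[OF z Gz] q_def by simp
    finally have "pv G Q y2 = z - (1 / q) \<cdot>\<^sub>v (q \<cdot>\<^sub>v z)" unfolding z_def .
    also have "\<dots> = 0\<^sub>v N" using q z by (auto intro!: eq_vecI)
    finally have "pv G Q y2 = 0\<^sub>v N" .
    moreover have "x = y1 + y2" unfolding y2_def using x y1 by (auto intro!: eq_vecI)
    ultimately show ?thesis using y1 y2 Gy1 cs unfolding Q_def by (intro exI[of _ y1] exI[of _ y2] exI[of _ cs]) auto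
  qed
qed

lemma conv_main: assumes ev: "\<And>a. eigenvalue G a \<Longrightarrow> cmod a < 1 \<or> a = 1"
  and ss: "\<And>w. w \<in> carrier_vec N \<Longrightarrow> G *\<^sub>v (G *\<^sub>v w - w) = G *\<^sub>v w - w \<Longrightarrow> G *\<^sub>v w = w"
  and x: "x \<in> carrier_vec N"
  shows "\<exists>L \<in> carrier_vec N. G *\<^sub>v L = L \<and> (\<forall>i<N. (\<lambda>k. itv G k x $ i) \<longlonglongrightarrow> L $ i)"
proof -
  from krylov[OF x] obtain p where p: "p \<noteq> 0" "pv G p x = 0\<^sub>v N" by auto
  from fundamental_theorem_algebra_factorized[of p] obtain as
    where as: "Polynomial.smult (lead_coeff p) (\<Prod>a\<leftarrow>as. [:- a, 1:]) = p" by blast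
  have lc: "lead_coeff p \<noteq> 0" using p by simp
  have "pv G p x = lead_coeff p \<cdot>\<^sub>v pv G (\<Prod>a\<leftarrow>as. [:- a, 1:]) x"
    by (subst (1) as[symmetric]) (rule pv_smult[OF x])
  then have "lead_coeff p \<cdot>\<^sub>v pv G (\<Prod>a\<leftarrow>as. [:- a, 1:]) x = 0\<^sub>v N" using p(2) by simp
  then have "pv G (\<Prod>a\<leftarrow>as. [:- a, 1:]) x = 0\<^sub>v N" using lc x
  proof (intro eq_vecI)
    fix i assume "i < dim_vec (0\<^sub>v N :: complex vec)"
    then have i: "i < N" by simp
    have d: "dim_vec (pv G (\<Prod>a\<leftarrow>as. [:- a, 1:]) x) = N" using x by simp
    from arg_cong[OF \<open>lead_coeff p \<cdot>\<^sub>v _ = _\<close>, of "\<lambda>w. w $ i"] i d lc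
    show "pv G (\<Prod>a\<leftarrow>as. [:- a, 1:]) x $ i = 0\<^sub>v N $ i" by simp
  qed (use x in simp)
  from pv_filter[OF ev x this] have flt: "pv G (\<Prod>c\<leftarrow>filter (\<lambda>a. cmod a < 1 \<or> a = 1) as. [:-c, 1:]) x = 0\<^sub>v N" .
  have good: "\<forall>a\<in>set (filter (\<lambda>a. cmod a < 1 \<or> a = 1) as). cmod a < 1 \<or> a = 1" by simp
  from pv_decomp[OF good ss x flt] obtain y1 y2 cs where
    y: "y1 \<in> carrier_vec N" "y2 \<in> carrier_vec N" "x = y1 + y2" "G *\<^sub>v y1 = y1"
    and cs: "\<forall>c\<in>set cs. cmod c < 1" "pv G (\<Prod>c\<leftarrow>cs. [:-c, 1:]) y2 = 0\<^sub>v N" by blast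
  show ?thesis
  proof (intro bexI[of _ y1] conjI allI impI)
    fix i assume i: "i < N"
    have "(\<lambda>k. itv G k y1 $ i + itv G k y2 $ i) \<longlonglongrightarrow> y1 $ i + 0"
      unfolding itv_fixed[OF y(1,4)] by (intro tendsto_add tendsto_const pv_decay[OF cs(1) y(2) cs(2) i])
    moreover have "itv G k x $ i = itv G k y1 $ i + itv G k y2 $ i" for k
      unfolding y(3) itv_add[OF y(1,2)] using i carrier_vecD[OF itv_carrier[OF y(1), of k]] carrier_vecD[OF itv_carrier[OF y(2), of k]]
      by simp
    ultimately show "(\<lambda>k. itv G k x $ i) \<longlonglongrightarrow> y1 $ i" by simp
  qed (use y in auto)
qed

end

lemma smult_mat_mult_vec: "(A::complex mat) \<in> carrier_mat nr nc \<Longrightarrow> v \<in> carrier_vec nc \<Longrightarrow>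
  (k \<cdot>\<^sub>m A) *\<^sub>v v = k \<cdot>\<^sub>v (A *\<^sub>v v)"
  by (intro eq_vecI) (auto simp: scalar_prod_def sum_distrib_left mult.assoc)

lemma append_minus: "(a::complex vec) \<in> carrier_vec n1 \<Longrightarrow> c \<in> carrier_vec n1 \<Longrightarrow> b \<in> carrier_vec n2 \<Longrightarrow> d \<in> carrier_vec n2 \<Longrightarrow>
  (a @\<^sub>v b) - (c @\<^sub>v d) = (a - c) @\<^sub>v (b - d)"
  by (intro eq_vecI) auto

lemma append_smult: "(a::complex vec) \<in> carrier_vec n1 \<Longrightarrow> b \<in> carrier_vec n2 \<Longrightarrow>
  k \<cdot>\<^sub>v (a @\<^sub>v b) = (k \<cdot>\<^sub>v a) @\<^sub>v (k \<cdot>\<^sub>v b)"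
  by (intro eq_vecI) auto

lemma cip_append: "(a::complex vec) \<in> carrier_vec n1 \<Longrightarrow> c \<in> carrier_vec n1 \<Longrightarrow> b \<in> carrier_vec n2 \<Longrightarrow> d \<in> carrier_vec n2 \<Longrightarrow>
  (a @\<^sub>v b) \<bullet>c (c @\<^sub>v d) = a \<bullet>c c + b \<bullet>c d"
proof -
  assume a: "a \<in> carrier_vec n1" and c: "c \<in> carrier_vec n1" and b: "b \<in> carrier_vec n2" and d: "d \<in> carrier_vec n2"
  have "conjugate (c @\<^sub>v d) = conjugate c @\<^sub>v conjugate d" using c d by (intro eq_vecI) auto
  then show ?thesis using scalar_prod_append[of a n1 b n2 "conjugate c" "conjugate d"] a b c d by simp
qed

lemma cip_uminus_right: "(a::complex vec) \<in> carrier_vec n \<Longrightarrow> b \<in> carrier_vec n \<Longrightarrow> a \<bullet>c (- b) = - (a \<bullet>c b)"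
  by (auto simp: scalar_prod_def sum_negf[symmetric])

lemma skew_re: fixes S :: "complex mat" assumes S: "S \<in> carrier_mat n n" and sk: "mat_adjoint S = - S"
  and u: "u \<in> carrier_vec n" shows "Re ((S *\<^sub>v u) \<bullet>c u) = 0"
proof -
  have Su: "S *\<^sub>v u \<in> carrier_vec n" using S u by simp
  have "(S *\<^sub>v u) \<bullet>c u = u \<bullet>c (- S *\<^sub>v u)" using adj_move[OF S u u] sk by simp
  also have "- S *\<^sub>v u = - (S *\<^sub>v u)" using S u by simp
  also have "u \<bullet>c (- (S *\<^sub>v u)) = - (u \<bullet>c (S *\<^sub>v u))" by (rule cip_uminus_right[OF u Su])
  also have "u \<bullet>c (S *\<^sub>v u) = cnj ((S *\<^sub>v u) \<bullet>c u)" using cip_sym[of u n "S *\<^sub>v u"] S u by simp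
  finally show ?thesis by (simp add: complex_eq_iff)
qed

lemma herm_part: fixes M :: "complex mat" assumes M: "M \<in> carrier_mat n n" and x: "x \<in> carrier_vec n"
  shows "Re (((M + mat_adjoint M) *\<^sub>v x) \<bullet>c x) = 2 * Re ((M *\<^sub>v x) \<bullet>c x)"
proof -
  have Ma: "mat_adjoint M \<in> carrier_mat n n" using M by simp
  have "((M + mat_adjoint M) *\<^sub>v x) \<bullet>c x = (M *\<^sub>v x) \<bullet>c x + (mat_adjoint M *\<^sub>v x) \<bullet>c x"
    unfolding add_mult_distrib_mat_vec[OF M Ma x] by (rule cip_add_left[of _ n]) (use M x mult_mat_vec_carrier[OF Ma x] in auto)
  also have "(mat_adjoint M *\<^sub>v x) \<bullet>c x = x \<bullet>c (M *\<^sub>v x)" using adj_move[OF Ma x x] by simp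
  also have "\<dots> = cnj ((M *\<^sub>v x) \<bullet>c x)" using cip_sym[of x n "M *\<^sub>v x"] M x by simp
  finally show ?thesis by simp
qed

context fixes Sg Si :: "complex mat" and N :: nat
  assumes Sg: "Sg \<in> carrier_mat N N" and Si: "Si \<in> carrier_mat N N"
    and herm: "mat_adjoint Sg = Sg" and inv1: "Sg * Si = 1\<^sub>m N" and inv2: "Si * Sg = 1\<^sub>m N"
begin

definition "gq y = Re ((Si *\<^sub>v y) \<bullet>c y)"

lemma SiSg: "v \<in> carrier_vec N \<Longrightarrow> Si *\<^sub>v (Sg *\<^sub>v v) = v"
  using assoc_mult_mat_vec[OF Si Sg, of v] inv2 by simp
lemma SgSi: "v \<in> carrier_vec N \<Longrightarrow> Sg *\<^sub>v (Si *\<^sub>v v) = v"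
  using assoc_mult_mat_vec[OF Sg Si, of v] inv1 by simp

lemma Si_swap: assumes b: "b \<in> carrier_vec N" and v: "v \<in> carrier_vec N"
  shows "(Si *\<^sub>v b) \<bullet>c (Sg *\<^sub>v v) = b \<bullet>c v"
proof -
  have Sib: "Si *\<^sub>v b \<in> carrier_vec N" using Si b by simp
  have "(Si *\<^sub>v b) \<bullet>c (Sg *\<^sub>v v) = cnj ((Sg *\<^sub>v v) \<bullet>c (Si *\<^sub>v b))"
    using cip_sym[OF Sib, of "Sg *\<^sub>v v"] Sg v by simp
  also have "(Sg *\<^sub>v v) \<bullet>c (Si *\<^sub>v b) = v \<bullet>c b" using adj_move[OF Sg v Sib] herm SgSi[OF b] by simp
  also have "cnj (v \<bullet>c b) = b \<bullet>c v" using cip_sym[OF b v] by simp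
  finally show ?thesis .
qed

lemma gq_expand: assumes a: "a \<in> carrier_vec N" and b: "b \<in> carrier_vec N"
  shows "gq (a + of_real t \<cdot>\<^sub>v b) = gq a + t * Re ((Si *\<^sub>v a) \<bullet>c b + (Si *\<^sub>v b) \<bullet>c a) + t^2 * gq b"
proof -
  have Sa: "Si *\<^sub>v a \<in> carrier_vec N" and Sb: "Si *\<^sub>v b \<in> carrier_vec N" using Si a b by auto
  have "(Si *\<^sub>v (a + of_real t \<cdot>\<^sub>v b)) \<bullet>c (a + of_real t \<cdot>\<^sub>v b) = (Si *\<^sub>v a + of_real t \<cdot>\<^sub>v (Si *\<^sub>v b)) \<bullet>c (a + of_real t \<cdot>\<^sub>v b)"
    using Si a b by (simp add: mult_add_distrib_mat_vec[OF Si] mult_mat_vec[OF Si])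
  also have "\<dots> = (Si *\<^sub>v a) \<bullet>c a + of_real t * ((Si *\<^sub>v a) \<bullet>c b) + of_real t * ((Si *\<^sub>v b) \<bullet>c a) + of_real t * of_real t * ((Si *\<^sub>v b) \<bullet>c b)"
    using Sa Sb a b by (simp add: cip_add_left[of _ N] cip_add_right[of _ N] cip_smult_left[of _ N] cip_smult_right[of _ N] algebra_simps)
  finally have e: "(Si *\<^sub>v (a + of_real t \<cdot>\<^sub>v b)) \<bullet>c (a + of_real t \<cdot>\<^sub>v b) = \<dots>" .
  show ?thesis unfolding gq_def e by (simp add: power2_eq_square algebra_simps)
qed

lemma gq_smult: assumes y: "y \<in> carrier_vec N" shows "gq (c \<cdot>\<^sub>v y) = (cmod c)^2 * gq y"
proof -
  have Sy: "Si *\<^sub>v y \<in> carrier_vec N" using Si y by auto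
  have "(Si *\<^sub>v (c \<cdot>\<^sub>v y)) \<bullet>c (c \<cdot>\<^sub>v y) = (c * cnj c) * ((Si *\<^sub>v y) \<bullet>c y)"
    using Sy y by (simp add: mult_mat_vec[OF Si y] cip_smult_left[of _ N] cip_smult_right[of _ N])
  also have "c * cnj c = of_real ((cmod c)^2)" by (metis complex_norm_square of_real_power)
  finally show ?thesis unfolding gq_def by simp
qed

lemma gq_pos: assumes pd: "\<And>z. z \<in> carrier_vec N \<Longrightarrow> z \<noteq> 0\<^sub>v N \<Longrightarrow> Re ((Sg *\<^sub>v z) \<bullet>c z) > 0"
  and y: "y \<in> carrier_vec N" and y0: "y \<noteq> 0\<^sub>v N" shows "gq y > 0"
proof -
  define z where "z = Si *\<^sub>v y"
  have z: "z \<in> carrier_vec N" unfolding z_def using Si y by auto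
  have yz: "y = Sg *\<^sub>v z" unfolding z_def using SgSi[OF y] by simp
  have "z \<noteq> 0\<^sub>v N" using y0 yz Sg by auto
  then have "Re ((Sg *\<^sub>v z) \<bullet>c z) > 0" using pd z by auto
  moreover have "gq y = Re (z \<bullet>c y)" unfolding gq_def z_def ..
  moreover have "z \<bullet>c y = cnj ((Sg *\<^sub>v z) \<bullet>c z)" unfolding yz using cip_sym[of z N "Sg *\<^sub>v z"] Sg z by simp
  ultimately show ?thesis by simp
qed

lemma gq_diff: assumes X: "X \<in> carrier_mat N N" and v: "v \<in> carrier_vec N"
  shows "gq ((Sg - X) *\<^sub>v v) = gq ((Sg + X) *\<^sub>v v) - 4 * Re ((X *\<^sub>v v) \<bullet>c v)"
proof -
  define a where "a = Sg *\<^sub>v v"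
  define b where "b = X *\<^sub>v v"
  have a: "a \<in> carrier_vec N" and b: "b \<in> carrier_vec N" unfolding a_def b_def using Sg X v by auto
  have Sa: "Si *\<^sub>v a = v" unfolding a_def using SiSg[OF v] .
  have Sb: "Si *\<^sub>v b \<in> carrier_vec N" using Si b by auto
  have e1: "(Sg - X) *\<^sub>v v = a - b" unfolding a_def b_def using Sg X v by (simp add: minus_mult_distrib_mat_vec)
  have e2: "(Sg + X) *\<^sub>v v = a + b" unfolding a_def b_def using Sg X v by (simp add: add_mult_distrib_mat_vec)
  have m: "(Si *\<^sub>v (a - b)) \<bullet>c (a - b) = v \<bullet>c a - v \<bullet>c b - (Si *\<^sub>v b) \<bullet>c a + (Si *\<^sub>v b) \<bullet>c b"
    using Sb a b v unfolding mult_minus_distrib_mat_vec[OF Si a b] Sa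
    by (simp add: cip_minus_left[of _ N] cip_minus_right[of _ N])
  have p: "(Si *\<^sub>v (a + b)) \<bullet>c (a + b) = v \<bullet>c a + v \<bullet>c b + (Si *\<^sub>v b) \<bullet>c a + (Si *\<^sub>v b) \<bullet>c b"
    using Sb a b v unfolding mult_add_distrib_mat_vec[OF Si a b] Sa
    by (simp add: cip_add_left[of _ N] cip_add_right[of _ N])
  have c1: "(Si *\<^sub>v b) \<bullet>c a = b \<bullet>c v" unfolding a_def by (rule Si_swap[OF b v])
  have c2: "v \<bullet>c b = cnj (b \<bullet>c v)" by (rule cip_sym[OF v b])
  show ?thesis unfolding gq_def e1 e2 m p c1 c2 b_def[symmetric] by simp
qed

end

lemma adj_mult_carrier[simp]: "(B::complex mat) \<in> carrier_mat nr nc \<Longrightarrow> y \<in> carrier_vec nr \<Longrightarrow> mat_adjoint B *\<^sub>v y \<in> carrier_vec nc"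
  using mult_mat_vec_carrier[OF adj_carrier] by blast

lemma cip_uminus_left: "(a::complex vec) \<in> carrier_vec n \<Longrightarrow> b \<in> carrier_vec n \<Longrightarrow> (- a) \<bullet>c b = - (a \<bullet>c b)"
  by (auto simp: scalar_prod_def sum_negf[symmetric])

lemma vec_minus_eq0: "(a::complex vec) \<in> carrier_vec n \<Longrightarrow> b \<in> carrier_vec n \<Longrightarrow> a - b = 0\<^sub>v n \<Longrightarrow> a = b"
  by (metis (no_types, lifting) carrier_vecD dim_vec index_minus_vec(1) index_zero_vec(1) eq_vecI right_minus_eq)

lemma mat_vec_zero[simp]: "(A::complex mat) \<in> carrier_mat nr nc \<Longrightarrow> A *\<^sub>v 0\<^sub>v nc = 0\<^sub>v nr"
  by (intro eq_vecI) auto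

lemma uminus_zero_plus[simp]: "(w::complex vec) \<in> carrier_vec n \<Longrightarrow> - 0\<^sub>v n + w = w"
  by (intro eq_vecI) auto

lemma inj_eq: fixes M :: "complex mat" assumes M: "M \<in> carrier_mat n n"
  and inj: "\<And>v. v \<in> carrier_vec n \<Longrightarrow> M *\<^sub>v v = 0\<^sub>v n \<Longrightarrow> v = 0\<^sub>v n"
  and a: "a \<in> carrier_vec n" and b: "b \<in> carrier_vec n" and eq: "M *\<^sub>v a = M *\<^sub>v b"
shows "a = b"
proof -
  have "M *\<^sub>v (a - b) = 0\<^sub>v n" using eq M a b by (simp add: mult_minus_distrib_mat_vec[OF M a b])
  then have "a - b = 0\<^sub>v n" using inj a b by simp
  then show ?thesis using vec_minus_eq0[OF a b] by simp
qed

lemma aux2: assumes h1: "(z::complex) + p = l - s" and h2: "l + s = z - p" shows "l = z"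
proof -
  define q where "q = p + s"
  have l: "l = z + q" using h1 unfolding q_def by (simp add: algebra_simps)
  have "z = l + q" using h2 unfolding q_def by (simp add: algebra_simps)
  then have "q + q = 0" unfolding l by (simp add: algebra_simps)
  then have "2 * q = 0" unfolding mult_2 .
  then have "q = 0" by simp
  then show ?thesis using l by simp
qed

lemma uminus_four_block: assumes "(A::complex mat) \<in> carrier_mat n1 m1" "B \<in> carrier_mat n1 m2" "C \<in> carrier_mat n2 m1" "D \<in> carrier_mat n2 m2"
  shows "- four_block_mat A B C D = four_block_mat (- A) (- B) (- C) (- D)"
  using assms by (intro eq_matI) auto

theorem theorem1:
  fixes n m :: nat
    and A A\<^sub>P A\<^sub>S P\<^sub>\<alpha> :: "complex mat"
    and C C\<^sub>P C\<^sub>S P\<^sub>\<beta> :: "complex mat"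
    and B B\<^sub>P B\<^sub>S :: "complex mat"
    and b :: "complex vec"
  defines "\<A> \<equiv> four_block_mat A (mat_adjoint B) (- B) C"
    and "\<P> \<equiv> four_block_mat A\<^sub>P (mat_adjoint B\<^sub>P) (- B\<^sub>P) C\<^sub>P"
    and "\<S> \<equiv> four_block_mat A\<^sub>S (mat_adjoint B\<^sub>S) (- B\<^sub>S) C\<^sub>S"
    and "\<Sigma> \<equiv> four_block_mat P\<^sub>\<alpha> (0\<^sub>m n m) (0\<^sub>m m n) P\<^sub>\<beta>"
  defines "\<Gamma> \<equiv> minv (\<Sigma> + \<S>) * (\<Sigma> - \<P>) * minv (\<Sigma> + \<P>) * (\<Sigma> - \<S>)"
    and "c \<equiv> (2 \<cdot>\<^sub>m (minv (\<Sigma> + \<S>) * \<Sigma> * minv (\<Sigma> + \<P>))) *\<^sub>v b"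
  assumes mn: "m \<le> n"
    and A: "pd_mat n A" and C: "psd_mat m C" and B: "B \<in> carrier_mat m n"
    and sing: "det \<A> = 0"
    and b: "b \<in> carrier_vec (n + m)"
    and consistent: "\<exists>u \<in> carrier_vec (n + m). \<A> *\<^sub>v u = b"
    and splitA: "A = A\<^sub>P + A\<^sub>S" and AP: "pd_mat n A\<^sub>P" and AS: "skew_herm_mat n A\<^sub>S"
    and splitC: "C = C\<^sub>P + C\<^sub>S" and CP: "psd_mat m C\<^sub>P" and CS: "skew_herm_mat m C\<^sub>S"
    and splitB: "B = B\<^sub>P + B\<^sub>S" and BP: "B\<^sub>P \<in> carrier_mat m n" and BS: "B\<^sub>S \<in> carrier_mat m n"
    and Pa: "hpd_mat n P\<^sub>\<alpha>" and Pb: "hpd_mat m P\<^sub>\<beta>"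
    and cond: "\<forall>\<mu> \<in> spectrum \<Gamma>. cmod \<mu> = 1 \<and> \<mu> \<noteq> 1 \<longrightarrow>
        (\<forall>r \<in> carrier_vec m. r \<noteq> 0\<^sub>v m \<and> (C + mat_adjoint C) *\<^sub>v r = 0\<^sub>v m \<longrightarrow>
          ((P\<^sub>\<beta> - B\<^sub>S * minv P\<^sub>\<alpha> * mat_adjoint B\<^sub>P + C\<^sub>S * minv P\<^sub>\<beta> * C\<^sub>P) *\<^sub>v r) \<bullet>c r
            \<noteq> (1 + \<mu>) / (1 - \<mu>) * ((C *\<^sub>v r) \<bullet>c r))"
  shows "\<forall>u0 \<in> carrier_vec (n + m). \<exists>u \<in> carrier_vec (n + m). \<A> *\<^sub>v u = b \<and>
           (\<forall>i < n + m. (\<lambda>k. lin_iter \<Gamma> c u0 k $ i) \<longlonglongrightarrow> u $ i)"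
proof -
  let ?N = "n + m"
  have Ac: "A \<in> carrier_mat n n" using A unfolding pd_mat_def by auto
  have APc: "A\<^sub>P \<in> carrier_mat n n" and APh: "hpd_mat n (A\<^sub>P + mat_adjoint A\<^sub>P)" using AP unfolding pd_mat_def by auto
  have ASc: "A\<^sub>S \<in> carrier_mat n n" and ASk: "mat_adjoint A\<^sub>S = - A\<^sub>S" using AS unfolding skew_herm_mat_def by auto
  have Cc: "C \<in> carrier_mat m m" using C unfolding psd_mat_def by auto
  have CPc: "C\<^sub>P \<in> carrier_mat m m" and CPh: "hpsd_mat m (C\<^sub>P + mat_adjoint C\<^sub>P)" using CP unfolding psd_mat_def by auto
  have CSc: "C\<^sub>S \<in> carrier_mat m m" and CSk: "mat_adjoint C\<^sub>S = - C\<^sub>S" using CS unfolding skew_herm_mat_def by auto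
  have Pac: "P\<^sub>\<alpha> \<in> carrier_mat n n" and Pah: "mat_adjoint P\<^sub>\<alpha> = P\<^sub>\<alpha>"
    and Pap: "\<And>x. x \<in> carrier_vec n \<Longrightarrow> x \<noteq> 0\<^sub>v n \<Longrightarrow> Re ((P\<^sub>\<alpha> *\<^sub>v x) \<bullet>c x) > 0"
    using Pa unfolding hpd_mat_def by auto
  have Pbc: "P\<^sub>\<beta> \<in> carrier_mat m m" and Pbh: "mat_adjoint P\<^sub>\<beta> = P\<^sub>\<beta>"
    and Pbp: "\<And>x. x \<in> carrier_vec m \<Longrightarrow> x \<noteq> 0\<^sub>v m \<Longrightarrow> Re ((P\<^sub>\<beta> *\<^sub>v x) \<bullet>c x) > 0"
    using Pb unfolding hpd_mat_def by auto
  have Sgc: "\<Sigma> \<in> carrier_mat ?N ?N" unfolding \<Sigma>_def using Pac Pbc by auto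
  have Pc: "\<P> \<in> carrier_mat ?N ?N" unfolding \<P>_def using APc CPc BP by auto
  have Sc: "\<S> \<in> carrier_mat ?N ?N" unfolding \<S>_def using ASc CSc BS by auto
  have Ac': "\<A> \<in> carrier_mat ?N ?N" unfolding \<A>_def using Ac Cc B by auto
  have AeqPS: "\<A> = \<P> + \<S>"
    unfolding \<A>_def \<P>_def \<S>_def splitA splitB splitC
    by (subst add_four_block_mat[of _ n n _ m _ m]) (use APc ASc CPc CSc BP BS in \<open>auto simp: adj_add intro!: cong_four_block_mat\<close>)
  have Sg_herm: "mat_adjoint \<Sigma> = \<Sigma>" unfolding \<Sigma>_def using Pac Pbc Pah Pbh
    by (subst adj_four_block[of _ n n _ m _ m]) auto
  have S_skew: "mat_adjoint \<S> = - \<S>" unfolding \<S>_def using ASc CSc BS ASk CSk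
    by (subst adj_four_block[of _ n n _ m _ m], auto simp: adj_uminus uminus_four_block[of _ n n _ m _ m])
  have Sg_split: "\<Sigma> *\<^sub>v (x @\<^sub>v y) = (P\<^sub>\<alpha> *\<^sub>v x) @\<^sub>v (P\<^sub>\<beta> *\<^sub>v y)" if "x \<in> carrier_vec n" "y \<in> carrier_vec m" for x y
    unfolding \<Sigma>_def by (rule mult_mat_vec_split[OF Pac Pbc that])
  have Sg_pd: "Re ((\<Sigma> *\<^sub>v z) \<bullet>c z) > 0" if z: "z \<in> carrier_vec ?N" "z \<noteq> 0\<^sub>v ?N" for z
  proof -
    define x where "x = vec_first z n"
    define y where "y = vec_last z m"
    have x: "x \<in> carrier_vec n" and y: "y \<in> carrier_vec m" unfolding x_def y_def by auto
    have zxy: "z = x @\<^sub>v y" unfolding x_def y_def using z by simp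
    have "(\<Sigma> *\<^sub>v z) \<bullet>c z = (P\<^sub>\<alpha> *\<^sub>v x) \<bullet>c x + (P\<^sub>\<beta> *\<^sub>v y) \<bullet>c y"
      unfolding zxy Sg_split[OF x y] by (rule cip_append) (use x y Pac Pbc in auto)
    moreover have "x \<noteq> 0\<^sub>v n \<or> y \<noteq> 0\<^sub>v m" using z zxy by auto
    moreover have "Re ((P\<^sub>\<alpha> *\<^sub>v x) \<bullet>c x) \<ge> 0" using Pap[OF x] cip_zero_right[OF mult_mat_vec_carrier[OF Pac x]] by (cases "x = 0\<^sub>v n") auto
    moreover have "Re ((P\<^sub>\<beta> *\<^sub>v y) \<bullet>c y) \<ge> 0" using Pbp[OF y] cip_zero_right[OF mult_mat_vec_carrier[OF Pbc y]] by (cases "y = 0\<^sub>v m") auto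
    ultimately show ?thesis using Pap[OF x] Pbp[OF y] by fastforce
  qed
  have P_split: "\<P> *\<^sub>v (x @\<^sub>v y) = (A\<^sub>P *\<^sub>v x + mat_adjoint B\<^sub>P *\<^sub>v y) @\<^sub>v (- (B\<^sub>P *\<^sub>v x) + C\<^sub>P *\<^sub>v y)"
    if x: "x \<in> carrier_vec n" and y: "y \<in> carrier_vec m" for x y
    unfolding \<P>_def using four_block_mat_mult_vec[OF APc adj_carrier[OF BP] uminus_carrier_mat[OF BP] CPc x y] BP x by simp
  have AP_pos: "Re ((A\<^sub>P *\<^sub>v x) \<bullet>c x) > 0" if x: "x \<in> carrier_vec n" "x \<noteq> 0\<^sub>v n" for x
    using APh x herm_part[OF APc x(1)] unfolding hpd_mat_def by force
  have CP_nn: "Re ((C\<^sub>P *\<^sub>v y) \<bullet>c y) \<ge> 0" if y: "y \<in> carrier_vec m" for y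
    using CPh y herm_part[OF CPc y] unfolding hpsd_mat_def by force
  have P_re: "Re ((\<P> *\<^sub>v (x @\<^sub>v y)) \<bullet>c (x @\<^sub>v y)) = Re ((A\<^sub>P *\<^sub>v x) \<bullet>c x) + Re ((C\<^sub>P *\<^sub>v y) \<bullet>c y)"
    if x: "x \<in> carrier_vec n" and y: "y \<in> carrier_vec m" for x y
  proof -
    have c1: "A\<^sub>P *\<^sub>v x \<in> carrier_vec n" "mat_adjoint B\<^sub>P *\<^sub>v y \<in> carrier_vec n" "B\<^sub>P *\<^sub>v x \<in> carrier_vec m"
      "C\<^sub>P *\<^sub>v y \<in> carrier_vec m" using APc BP CPc x y by auto
    have "(\<P> *\<^sub>v (x @\<^sub>v y)) \<bullet>c (x @\<^sub>v y) = (A\<^sub>P *\<^sub>v x + mat_adjoint B\<^sub>P *\<^sub>v y) \<bullet>c x + (- (B\<^sub>P *\<^sub>v x) + C\<^sub>P *\<^sub>v y) \<bullet>c y"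
      unfolding P_split[OF x y] by (rule cip_append) (use c1 x y in auto)
    also have "\<dots> = (A\<^sub>P *\<^sub>v x) \<bullet>c x + (mat_adjoint B\<^sub>P *\<^sub>v y) \<bullet>c x + ((- (B\<^sub>P *\<^sub>v x)) \<bullet>c y + (C\<^sub>P *\<^sub>v y) \<bullet>c y)"
      using c1 x y by (simp add: cip_add_left[of _ n] cip_add_left[of _ m])
    also have "(mat_adjoint B\<^sub>P *\<^sub>v y) \<bullet>c x = y \<bullet>c (B\<^sub>P *\<^sub>v x)" using adj_move[OF adj_carrier[OF BP] y x] by simp
    also have "\<dots> = cnj ((B\<^sub>P *\<^sub>v x) \<bullet>c y)" using cip_sym[OF y c1(3)] .
    also have "(- (B\<^sub>P *\<^sub>v x)) \<bullet>c y = - ((B\<^sub>P *\<^sub>v x) \<bullet>c y)" by (rule cip_uminus_left[OF c1(3) y])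
    finally show ?thesis by simp
  qed
  have P_nn: "Re ((\<P> *\<^sub>v z) \<bullet>c z) \<ge> 0" if z: "z \<in> carrier_vec ?N" for z
  proof -
    have zxy: "z = vec_first z n @\<^sub>v vec_last z m" using z by simp
    have "Re ((A\<^sub>P *\<^sub>v vec_first z n) \<bullet>c vec_first z n) \<ge> 0"
      using AP_pos[of "vec_first z n"] cip_zero_right[OF mult_mat_vec_carrier[OF APc, of "0\<^sub>v n"]]
      by (cases "vec_first z n = 0\<^sub>v n") auto
    then show ?thesis using P_re[of "vec_first z n" "vec_last z m"] CP_nn[of "vec_last z m"] zxy by simp
  qed
  have P_zero: "vec_first z n = 0\<^sub>v n \<and> (C\<^sub>P + mat_adjoint C\<^sub>P) *\<^sub>v vec_last z m = 0\<^sub>v m"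
    if z: "z \<in> carrier_vec ?N" and re: "Re ((\<P> *\<^sub>v z) \<bullet>c z) = 0" for z
  proof -
    have zxy: "z = vec_first z n @\<^sub>v vec_last z m" using z by simp
    have s: "Re ((A\<^sub>P *\<^sub>v vec_first z n) \<bullet>c vec_first z n) + Re ((C\<^sub>P *\<^sub>v vec_last z m) \<bullet>c vec_last z m) = 0"
      using P_re[of "vec_first z n" "vec_last z m"] re zxy by simp
    have "Re ((A\<^sub>P *\<^sub>v vec_first z n) \<bullet>c vec_first z n) \<ge> 0"
      using AP_pos[of "vec_first z n"] cip_zero_right[OF mult_mat_vec_carrier[OF APc, of "0\<^sub>v n"]]
      by (cases "vec_first z n = 0\<^sub>v n") auto
    with s CP_nn[of "vec_last z m"] have r1: "Re ((A\<^sub>P *\<^sub>v vec_first z n) \<bullet>c vec_first z n) = 0"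
      and r2: "Re ((C\<^sub>P *\<^sub>v vec_last z m) \<bullet>c vec_last z m) = 0" by auto
    have "vec_first z n = 0\<^sub>v n" using AP_pos[of "vec_first z n"] r1 by fastforce
    moreover have "(C\<^sub>P + mat_adjoint C\<^sub>P) *\<^sub>v vec_last z m = 0\<^sub>v m"
      by (rule psd_null[of _ m]) (use CPh r2 herm_part[OF CPc, of "vec_last z m"] in \<open>auto simp: hpsd_mat_def\<close>)
    ultimately show ?thesis ..
  qed
  have S_re: "Re ((\<S> *\<^sub>v z) \<bullet>c z) = 0" if z: "z \<in> carrier_vec ?N" for z
    by (rule skew_re[OF Sc S_skew z])
  have sum_re: "Re (((\<Sigma> + X) *\<^sub>v z) \<bullet>c z) = Re ((\<Sigma> *\<^sub>v z) \<bullet>c z) + Re ((X *\<^sub>v z) \<bullet>c z)"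
    if X: "X \<in> carrier_mat ?N ?N" and z: "z \<in> carrier_vec ?N" for X z
    using Sgc X z by (simp add: add_mult_distrib_mat_vec[OF Sgc X z] cip_add_left[of _ ?N])
  have inj_pos: "\<And>v. v \<in> carrier_vec ?N \<Longrightarrow> M *\<^sub>v v = 0\<^sub>v ?N \<Longrightarrow> v = 0\<^sub>v ?N"
    if M: "M \<in> carrier_mat ?N ?N" and pos: "\<And>z. z \<in> carrier_vec ?N \<Longrightarrow> z \<noteq> 0\<^sub>v ?N \<Longrightarrow> Re ((M *\<^sub>v z) \<bullet>c z) > 0" for M
    using pos_inj[OF M pos] by blast
  have Ppc: "\<Sigma> + \<P> \<in> carrier_mat ?N ?N" and Spc: "\<Sigma> + \<S> \<in> carrier_mat ?N ?N"
    and Smc: "\<Sigma> - \<S> \<in> carrier_mat ?N ?N" and Pmc: "\<Sigma> - \<P> \<in> carrier_mat ?N ?N" using Sgc Pc Sc by auto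
  have Pp_inj: "\<And>v. v \<in> carrier_vec ?N \<Longrightarrow> (\<Sigma> + \<P>) *\<^sub>v v = 0\<^sub>v ?N \<Longrightarrow> v = 0\<^sub>v ?N"
    by (rule inj_pos[OF Ppc]) (use sum_re[OF Pc] Sg_pd P_nn in fastforce)
  have Sp_inj: "\<And>v. v \<in> carrier_vec ?N \<Longrightarrow> (\<Sigma> + \<S>) *\<^sub>v v = 0\<^sub>v ?N \<Longrightarrow> v = 0\<^sub>v ?N"
    by (rule inj_pos[OF Spc]) (use sum_re[OF Sc] Sg_pd S_re in fastforce)
  have Sm_inj: "\<And>v. v \<in> carrier_vec ?N \<Longrightarrow> (\<Sigma> - \<S>) *\<^sub>v v = 0\<^sub>v ?N \<Longrightarrow> v = 0\<^sub>v ?N"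
  proof (rule inj_pos[OF Smc])
    fix z :: "complex vec" assume z: "z \<in> carrier_vec ?N" "z \<noteq> 0\<^sub>v ?N"
    have "(\<Sigma> - \<S>) *\<^sub>v z = \<Sigma> *\<^sub>v z - \<S> *\<^sub>v z" using Sgc Sc z by (simp add: minus_mult_distrib_mat_vec)
    then have "((\<Sigma> - \<S>) *\<^sub>v z) \<bullet>c z = (\<Sigma> *\<^sub>v z) \<bullet>c z - (\<S> *\<^sub>v z) \<bullet>c z"
      using Sgc Sc z by (simp add: cip_minus_left[of _ ?N])
    then show "Re (((\<Sigma> - \<S>) *\<^sub>v z) \<bullet>c z) > 0" using Sg_pd[OF z] S_re[OF z(1)] by simp
  qed
  have Sg_inj: "\<And>v. v \<in> carrier_vec ?N \<Longrightarrow> \<Sigma> *\<^sub>v v = 0\<^sub>v ?N \<Longrightarrow> v = 0\<^sub>v ?N"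
    by (rule inj_pos[OF Sgc Sg_pd])
  note Ppi = minv_props[OF Ppc Pp_inj] and Spi = minv_props[OF Spc Sp_inj] and Sgi = minv_props[OF Sgc Sg_inj]
  define Si where "Si = minv \<Sigma>"
  have Sic: "Si \<in> carrier_mat ?N ?N" and inv1: "\<Sigma> * Si = 1\<^sub>m ?N" and inv2: "Si * \<Sigma> = 1\<^sub>m ?N"
    using Sgi unfolding Si_def by auto
  note gctx = Sgc Sic Sg_herm inv1 inv2
  have Gc: "\<Gamma> \<in> carrier_mat ?N ?N" unfolding \<Gamma>_def by (rule mult_carrier_mat[OF mult_carrier_mat[OF mult_carrier_mat[OF Spi(1) Pmc] Ppi(1)] Smc])
  define vv where "vv u = minv (\<Sigma> + \<P>) *\<^sub>v ((\<Sigma> - \<S>) *\<^sub>v u)" for u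
  have vvc: "vv u \<in> carrier_vec ?N" if "u \<in> carrier_vec ?N" for u
    unfolding vv_def using that Ppi Smc by auto
  have G_app: "\<Gamma> *\<^sub>v u = minv (\<Sigma> + \<S>) *\<^sub>v ((\<Sigma> - \<P>) *\<^sub>v vv u)" if u: "u \<in> carrier_vec ?N" for u
    unfolding \<Gamma>_def vv_def using Ppi Spi Pmc Smc u by (simp add: assoc_mult_mat_vec[of _ ?N ?N _ ?N])
  have Sp_G: "(\<Sigma> + \<S>) *\<^sub>v (\<Gamma> *\<^sub>v u) = (\<Sigma> - \<P>) *\<^sub>v vv u" if u: "u \<in> carrier_vec ?N" for u
    unfolding G_app[OF u] by (rule minv_left(2)[OF Spc Sp_inj]) (use Pmc vvc[OF u] in auto)
  have Pp_vv: "(\<Sigma> + \<P>) *\<^sub>v vv u = (\<Sigma> - \<S>) *\<^sub>v u" if u: "u \<in> carrier_vec ?N" for u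
    unfolding vv_def by (rule minv_left(2)[OF Ppc Pp_inj]) (use Smc u in auto)
  define f where "f u = gq Si ((\<Sigma> + \<S>) *\<^sub>v u)" for u
  have f_G: "f (\<Gamma> *\<^sub>v u) = f u - 4 * Re ((\<P> *\<^sub>v vv u) \<bullet>c vv u)" if u: "u \<in> carrier_vec ?N" for u
  proof -
    have "f (\<Gamma> *\<^sub>v u) = gq Si ((\<Sigma> - \<P>) *\<^sub>v vv u)" unfolding f_def Sp_G[OF u] ..
    also have "\<dots> = gq Si ((\<Sigma> + \<P>) *\<^sub>v vv u) - 4 * Re ((\<P> *\<^sub>v vv u) \<bullet>c vv u)"
      by (rule gq_diff[OF gctx Pc vvc[OF u]])
    also have "gq Si ((\<Sigma> + \<P>) *\<^sub>v vv u) = gq Si ((\<Sigma> - \<S>) *\<^sub>v u)" unfolding Pp_vv[OF u] ..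
    also have "\<dots> = f u - 4 * Re ((\<S> *\<^sub>v u) \<bullet>c u)" unfolding f_def by (rule gq_diff[OF gctx Sc u])
    finally show ?thesis using S_re[OF u] by simp
  qed
  have f_contr: "f (\<Gamma> *\<^sub>v u) \<le> f u" if u: "u \<in> carrier_vec ?N" for u
    using f_G[OF u] P_nn[OF vvc[OF u]] by simp
  have f_pos: "f u > 0" if u: "u \<in> carrier_vec ?N" "u \<noteq> 0\<^sub>v ?N" for u
    unfolding f_def by (rule gq_pos[OF gctx Sg_pd]) (use Spc u Sp_inj in auto)
  have ss: "\<Gamma> *\<^sub>v w = w" if w: "w \<in> carrier_vec ?N" and h: "\<Gamma> *\<^sub>v (\<Gamma> *\<^sub>v w - w) = \<Gamma> *\<^sub>v w - w" for w
  proof (rule ccontr)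
    assume ne: "\<Gamma> *\<^sub>v w \<noteq> w"
    define d where "d = \<Gamma> *\<^sub>v w - w"
    have Gw: "\<Gamma> *\<^sub>v w \<in> carrier_vec ?N" using Gc w by simp
    have d: "d \<in> carrier_vec ?N" using Gw w by (simp add: d_def)
    have d0: "d \<noteq> 0\<^sub>v ?N" using ne vec_minus_eq0[OF Gw w] unfolding d_def by blast
    have Gd: "\<Gamma> *\<^sub>v d = d" using h unfolding d_def .
    have it: "itv \<Gamma> k w = w + of_real (real k) \<cdot>\<^sub>v d" for k
    proof (induct k)
      case 0 then show ?case using w d by (auto simp: itv_0[OF Gc] intro!: eq_vecI)
    next
      case (Suc k)
      have "itv \<Gamma> (Suc k) w = \<Gamma> *\<^sub>v w + of_real (real k) \<cdot>\<^sub>v (\<Gamma> *\<^sub>v d)"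
        unfolding itv_Suc[OF Gc] Suc using Gc w d by (simp add: mult_add_distrib_mat_vec[OF Gc] mult_mat_vec[OF Gc])
      also have "\<dots> = w + of_real (real (Suc k)) \<cdot>\<^sub>v d" unfolding Gd using w d Gw
        by (intro eq_vecI) (auto simp: d_def algebra_simps)
      finally show ?case .
    qed
    have fit: "f (itv \<Gamma> k w) \<le> f w" for k
    proof (induct k)
      case (Suc k)
      have "f (itv \<Gamma> (Suc k) w) \<le> f (itv \<Gamma> k w)" unfolding itv_Suc[OF Gc] by (rule f_contr[OF itv_carrier[OF Gc w]])
      then show ?case using Suc by simp
    qed (simp add: itv_0[OF Gc])
    define K where "K = Re ((Si *\<^sub>v ((\<Sigma> + \<S>) *\<^sub>v w)) \<bullet>c ((\<Sigma> + \<S>) *\<^sub>v d) + (Si *\<^sub>v ((\<Sigma> + \<S>) *\<^sub>v d)) \<bullet>c ((\<Sigma> + \<S>) *\<^sub>v w))"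
    have fexp: "f (w + of_real t \<cdot>\<^sub>v d) = f w + t * K + t^2 * f d" for t
    proof -
      have "(\<Sigma> + \<S>) *\<^sub>v (w + of_real t \<cdot>\<^sub>v d) = (\<Sigma> + \<S>) *\<^sub>v w + of_real t \<cdot>\<^sub>v ((\<Sigma> + \<S>) *\<^sub>v d)"
        using Spc w d by (simp add: mult_add_distrib_mat_vec[OF Spc] mult_mat_vec[OF Spc])
      then show ?thesis unfolding f_def K_def using gq_expand[OF gctx, of "(\<Sigma> + \<S>) *\<^sub>v w" "(\<Sigma> + \<S>) *\<^sub>v d" t] Spc w d by simp
    qed
    have fd: "f d > 0" by (rule f_pos[OF d d0])
    define k where "k = nat (ceiling (abs K / f d)) + 1"
    have kpos: "real k > 0" unfolding k_def by simp
    have "abs K / f d < real k" unfolding k_def by linarith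
    then have kK: "abs K < real k * f d" using fd by (simp add: field_simps)
    have "f w + real k * K + (real k)^2 * f d \<le> f w" using fit[of k] fexp[of "real k"] it[of k] by simp
    then have "real k * (K + real k * f d) \<le> 0" by (simp add: power2_eq_square algebra_simps)
    moreover have "K + real k * f d > 0" using kK by linarith
    ultimately show False using kpos by (simp add: mult_le_0_iff)
  qed
  have S_split: "\<S> *\<^sub>v (x @\<^sub>v y) = (A\<^sub>S *\<^sub>v x + mat_adjoint B\<^sub>S *\<^sub>v y) @\<^sub>v (- (B\<^sub>S *\<^sub>v x) + C\<^sub>S *\<^sub>v y)"
    if x: "x \<in> carrier_vec n" and y: "y \<in> carrier_vec m" for x y
    unfolding \<S>_def using four_block_mat_mult_vec[OF ASc adj_carrier[OF BS] uminus_carrier_mat[OF BS] CSc x y] BS x by simp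
  have Pa_inj: "\<And>v. v \<in> carrier_vec n \<Longrightarrow> P\<^sub>\<alpha> *\<^sub>v v = 0\<^sub>v n \<Longrightarrow> v = 0\<^sub>v n" using pos_inj[OF Pac Pap] by blast
  have Pb_inj: "\<And>v. v \<in> carrier_vec m \<Longrightarrow> P\<^sub>\<beta> *\<^sub>v v = 0\<^sub>v m \<Longrightarrow> v = 0\<^sub>v m" using pos_inj[OF Pbc Pbp] by blast
  have ev: "cmod a < 1 \<or> a = 1" if ea: "eigenvalue \<Gamma> a" for a
  proof -
    obtain u where u: "u \<in> carrier_vec ?N" "u \<noteq> 0\<^sub>v ?N" "\<Gamma> *\<^sub>v u = a \<cdot>\<^sub>v u"
      using ea Gc unfolding eigenvalue_def eigenvector_def by auto
    define v where "v = vv u"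
    have v: "v \<in> carrier_vec ?N" unfolding v_def by (rule vvc[OF u(1)])
    define R where "R = Re ((\<P> *\<^sub>v v) \<bullet>c v)"
    have R: "R \<ge> 0" unfolding R_def by (rule P_nn[OF v])
    have Spu: "(\<Sigma> + \<S>) *\<^sub>v u \<in> carrier_vec ?N" using Spc u by simp
    have "f (a \<cdot>\<^sub>v u) = (cmod a)^2 * f u" unfolding f_def mult_mat_vec[OF Spc u(1)]
      by (rule gq_smult[OF gctx Spu])
    then have eq: "(cmod a)^2 * f u = f u - 4 * R" using f_G[OF u(1)] u(3) unfolding R_def v_def by simp
    have fu: "f u > 0" by (rule f_pos[OF u(1,2)])
    show ?thesis
    proof (rule ccontr)
      assume "\<not> (cmod a < 1 \<or> a = 1)"
      then have a1: "cmod a \<ge> 1" "a \<noteq> 1" by auto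
      have "(cmod a)^2 \<ge> 1" using a1 by (simp add: one_le_power)
      then have "(cmod a)^2 * f u \<ge> f u" using fu by simp
      with eq R have R0: "R = 0" by linarith
      with eq have "(cmod a)^2 * f u = f u" by simp
      then have ca: "(cmod a)^2 = 1" using fu by simp
      have a0: "a \<noteq> 0" using ca by auto
      from P_zero[OF v R0[unfolded R_def]] have x0: "vec_first v n = 0\<^sub>v n"
        and Cy0: "(C\<^sub>P + mat_adjoint C\<^sub>P) *\<^sub>v vec_last v m = 0\<^sub>v m" by auto
      define y where "y = vec_last v m"
      have y: "y \<in> carrier_vec m" unfolding y_def by simp
      have vy: "v = 0\<^sub>v n @\<^sub>v y" using v x0 unfolding y_def by (metis vec_first_last_append)
      define ux where "ux = vec_first u n"
      define uy where "uy = vec_last u m"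
      have ux: "ux \<in> carrier_vec n" and uy: "uy \<in> carrier_vec m" unfolding ux_def uy_def by auto
      have uxy: "u = ux @\<^sub>v uy" unfolding ux_def uy_def using u(1) by simp
      have "y \<noteq> 0\<^sub>v m"
      proof
        assume "y = 0\<^sub>v m"
        then have "v = 0\<^sub>v ?N" using vy by (auto intro!: eq_vecI)
        then have "(\<Sigma> - \<S>) *\<^sub>v u = 0\<^sub>v ?N" using Pp_vv[OF u(1)] Ppc unfolding v_def by simp
        then show False using Sm_inj[OF u(1)] u(2) by simp
      qed
      then have y0: "y \<noteq> 0\<^sub>v m" .
      define b where "b = 1 / a"
      have ab: "b * a = 1" using a0 unfolding b_def by simp
      have b1: "1 - b \<noteq> 0" using a1(2) a0 unfolding b_def by (auto simp: field_simps)
      define bp where "bp = mat_adjoint B\<^sub>P *\<^sub>v y"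
      define pb where "pb = P\<^sub>\<beta> *\<^sub>v y"
      define cp where "cp = C\<^sub>P *\<^sub>v y"
      define sx where "sx = A\<^sub>S *\<^sub>v ux + mat_adjoint B\<^sub>S *\<^sub>v uy"
      define sy where "sy = - (B\<^sub>S *\<^sub>v ux) + C\<^sub>S *\<^sub>v uy"
      define pax where "pax = P\<^sub>\<alpha> *\<^sub>v ux"
      define pby where "pby = P\<^sub>\<beta> *\<^sub>v uy"
      have bpc: "bp \<in> carrier_vec n" unfolding bp_def using BP y by simp
      have pbc: "pb \<in> carrier_vec m" unfolding pb_def using Pbc y by simp
      have cpc: "cp \<in> carrier_vec m" unfolding cp_def using CPc y by simp
      have sxc: "sx \<in> carrier_vec n" unfolding sx_def using ASc BS ux uy by simp
      have syc: "sy \<in> carrier_vec m" unfolding sy_def using CSc BS ux uy by simp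
      have paxc: "pax \<in> carrier_vec n" unfolding pax_def using Pac ux by simp
      have pbyc: "pby \<in> carrier_vec m" unfolding pby_def using Pbc uy by simp
      have Sg_u: "\<Sigma> *\<^sub>v u = pax @\<^sub>v pby" unfolding uxy pax_def pby_def by (rule Sg_split[OF ux uy])
      have S_u: "\<S> *\<^sub>v u = sx @\<^sub>v sy" unfolding uxy sx_def sy_def by (rule S_split[OF ux uy])
      have Sg_v: "\<Sigma> *\<^sub>v v = 0\<^sub>v n @\<^sub>v pb" unfolding vy pb_def using Sg_split[OF zero_carrier_vec y] Pac by simp
      have P_v: "\<P> *\<^sub>v v = bp @\<^sub>v cp" unfolding vy bp_def cp_def using P_split[OF zero_carrier_vec y] APc BP y CPc
        by simp
      have F1: "\<Sigma> *\<^sub>v u - \<S> *\<^sub>v u = \<Sigma> *\<^sub>v v + \<P> *\<^sub>v v"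
        using Pp_vv[OF u(1)] unfolding v_def[symmetric] add_mult_distrib_mat_vec[OF Sgc Pc v]
          minus_mult_distrib_mat_vec[OF Sgc Sc u(1)] by (rule sym)
      have F2: "a \<cdot>\<^sub>v (\<Sigma> *\<^sub>v u + \<S> *\<^sub>v u) = \<Sigma> *\<^sub>v v - \<P> *\<^sub>v v"
        using Sp_G[OF u(1)] unfolding v_def[symmetric] u(3) mult_mat_vec[OF Spc u(1)] add_mult_distrib_mat_vec[OF Sgc Sc u(1)]
          minus_mult_distrib_mat_vec[OF Sgc Pc v] .
      have F1a: "pax $ j - sx $ j = bp $ j" if j: "j < n" for j
        using arg_cong[OF F1, of "\<lambda>w. w $ j"] j paxc pbyc sxc syc bpc cpc pbc unfolding Sg_u S_u Sg_v P_v by simp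
      have F1b: "pby $ i - sy $ i = pb $ i + cp $ i" if i: "i < m" for i
        using arg_cong[OF F1, of "\<lambda>w. w $ (n + i)"] i paxc pbyc sxc syc bpc cpc pbc unfolding Sg_u S_u Sg_v P_v by simp
      have F2a: "a * (pax $ j + sx $ j) = - bp $ j" if j: "j < n" for j
        using arg_cong[OF F2, of "\<lambda>w. w $ j"] j paxc pbyc sxc syc bpc cpc pbc unfolding Sg_u S_u Sg_v P_v by simp
      have F2b: "a * (pby $ i + sy $ i) = pb $ i - cp $ i" if i: "i < m" for i
        using arg_cong[OF F2, of "\<lambda>w. w $ (n + i)"] i paxc pbyc sxc syc bpc cpc pbc unfolding Sg_u S_u Sg_v P_v by simp
      have binv: "b * (a * z) = z" for z using ab by (simp add: mult.assoc[symmetric])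
      have E1: "pax $ j = (1 - b) / 2 * bp $ j" if j: "j < n" for j
      proof -
        have h: "pax $ j + sx $ j = - b * bp $ j" using binv[of "pax $ j + sx $ j"] F2a[OF j] by simp
        have "2 * pax $ j = (pax $ j - sx $ j) + (pax $ j + sx $ j)" by simp
        also have "\<dots> = bp $ j - b * bp $ j" unfolding F1a[OF j] h by simp
        finally show ?thesis by (simp add: field_simps)
      qed
      have hb: "pby $ i + sy $ i = b * (pb $ i - cp $ i)" if i: "i < m" for i
        using binv[of "pby $ i + sy $ i"] F2b[OF i] by simp
      have E2: "pby $ i = (1 + b) / 2 * pb $ i + (1 - b) / 2 * cp $ i" if i: "i < m" for i
      proof -
        have "2 * pby $ i = (pby $ i - sy $ i) + (pby $ i + sy $ i)" by simp
        also have "\<dots> = pb $ i + cp $ i + b * (pb $ i - cp $ i)" unfolding F1b[OF i] hb[OF i] by simp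
        finally have "pby $ i = (pb $ i + cp $ i + b * (pb $ i - cp $ i)) / 2" by (simp add: eq_divide_eq mult.commute)
        also have "\<dots> = (1 + b) / 2 * pb $ i + (1 - b) / 2 * cp $ i" by (simp add: field_simps)
        finally show ?thesis .
      qed
      have E3: "sy $ i = (b - 1) / 2 * pb $ i - (1 + b) / 2 * cp $ i" if i: "i < m" for i
      proof -
        have "2 * sy $ i = (pby $ i + sy $ i) - (pby $ i - sy $ i)" by simp
        also have "\<dots> = b * (pb $ i - cp $ i) - (pb $ i + cp $ i)" unfolding F1b[OF i] hb[OF i] by simp
        finally have "sy $ i = (b * (pb $ i - cp $ i) - (pb $ i + cp $ i)) / 2" by (simp add: eq_divide_eq mult.commute)
        also have "\<dots> = (b - 1) / 2 * pb $ i - (1 + b) / 2 * cp $ i" by (simp add: field_simps)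
        finally show ?thesis .
      qed
      note Pai = minv_props[OF Pac Pa_inj] and Pbi = minv_props[OF Pbc Pb_inj]
      have pax_eq: "pax = ((1 - b) / 2) \<cdot>\<^sub>v bp" using E1 paxc bpc by (intro eq_vecI) auto
      have ux_eq: "ux = ((1 - b) / 2) \<cdot>\<^sub>v (minv P\<^sub>\<alpha> *\<^sub>v bp)"
      proof -
        have "ux = minv P\<^sub>\<alpha> *\<^sub>v pax" unfolding pax_def using minv_left(1)[OF Pac Pa_inj ux] by simp
        also have "\<dots> = ((1 - b) / 2) \<cdot>\<^sub>v (minv P\<^sub>\<alpha> *\<^sub>v bp)" unfolding pax_eq by (rule mult_mat_vec[OF Pai(1) bpc])
        finally show ?thesis .
      qed
      have pby_eq: "pby = ((1 + b) / 2) \<cdot>\<^sub>v pb + ((1 - b) / 2) \<cdot>\<^sub>v cp" using E2 pbyc pbc cpc by (intro eq_vecI) auto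
      have uy_eq: "uy = ((1 + b) / 2) \<cdot>\<^sub>v y + ((1 - b) / 2) \<cdot>\<^sub>v (minv P\<^sub>\<beta> *\<^sub>v cp)"
      proof -
        have "uy = minv P\<^sub>\<beta> *\<^sub>v pby" unfolding pby_def using minv_left(1)[OF Pbc Pb_inj uy] by simp
        also have "\<dots> = ((1 + b) / 2) \<cdot>\<^sub>v (minv P\<^sub>\<beta> *\<^sub>v pb) + ((1 - b) / 2) \<cdot>\<^sub>v (minv P\<^sub>\<beta> *\<^sub>v cp)"
          unfolding pby_eq using pbc cpc by (simp add: mult_add_distrib_mat_vec[OF Pbi(1)] mult_mat_vec[OF Pbi(1)])
        also have "minv P\<^sub>\<beta> *\<^sub>v pb = y" unfolding pb_def using minv_left(1)[OF Pbc Pb_inj y] .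
        finally show ?thesis .
      qed
      define t1 where "t1 = B\<^sub>S *\<^sub>v (minv P\<^sub>\<alpha> *\<^sub>v bp)"
      define t2 where "t2 = C\<^sub>S *\<^sub>v y"
      define t3 where "t3 = C\<^sub>S *\<^sub>v (minv P\<^sub>\<beta> *\<^sub>v cp)"
      have t1c: "t1 \<in> carrier_vec m" unfolding t1_def using BS Pai(1) bpc by simp
      have t2c: "t2 \<in> carrier_vec m" unfolding t2_def using CSc y by simp
      have t3c: "t3 \<in> carrier_vec m" unfolding t3_def using CSc Pbi(1) cpc by simp
      have sy_eq: "sy = - (((1 - b) / 2) \<cdot>\<^sub>v t1) + (((1 + b) / 2) \<cdot>\<^sub>v t2 + ((1 - b) / 2) \<cdot>\<^sub>v t3)"
        unfolding sy_def ux_eq uy_eq t1_def t2_def t3_def using Pai(1) Pbi(1) bpc cpc y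
        by (simp add: mult_mat_vec[OF BS] mult_mat_vec[OF CSc] mult_add_distrib_mat_vec[OF CSc])
      have key: "pb $ i - t1 $ i + t3 $ i = - (1 + b) / (1 - b) * (cp $ i + t2 $ i)" if i: "i < m" for i
      proof -
        have H2: "2 * sy $ i = - ((1 - b) * t1 $ i) + ((1 + b) * t2 $ i + (1 - b) * t3 $ i)"
        proof -
          have "sy $ i = - ((1 - b) / 2 * t1 $ i) + ((1 + b) / 2 * t2 $ i + (1 - b) / 2 * t3 $ i)"
            unfolding sy_eq using i t1c t2c t3c by simp
          then have "2 * sy $ i = 2 * (- ((1 - b) / 2 * t1 $ i) + ((1 + b) / 2 * t2 $ i + (1 - b) / 2 * t3 $ i))" by simp
          also have "\<dots> = - ((1 - b) * t1 $ i) + ((1 + b) * t2 $ i + (1 - b) * t3 $ i)" by (simp add: field_simps)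
          finally show ?thesis .
        qed
        have H1: "2 * sy $ i = (b - 1) * pb $ i - (1 + b) * cp $ i" unfolding E3[OF i] by (simp add: field_simps)
        have "(1 - b) * (pb $ i - t1 $ i + t3 $ i) + (1 + b) * (cp $ i + t2 $ i)
          = (- ((1 - b) * t1 $ i) + ((1 + b) * t2 $ i + (1 - b) * t3 $ i)) - ((b - 1) * pb $ i - (1 + b) * cp $ i)"
          by (simp add: algebra_simps)
        also have "\<dots> = 0" unfolding H1[symmetric] H2[symmetric] by simp
        finally have eqk: "(1 - b) * (pb $ i - t1 $ i + t3 $ i) = - ((1 + b) * (cp $ i + t2 $ i))"
          by (simp add: add_eq_0_iff2)
        have "pb $ i - t1 $ i + t3 $ i = ((1 - b) * (pb $ i - t1 $ i + t3 $ i)) / (1 - b)" using b1 by simp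
        also have "\<dots> = (- ((1 + b) * (cp $ i + t2 $ i))) / (1 - b)" unfolding eqk ..
        also have "\<dots> = - (1 + b) / (1 - b) * (cp $ i + t2 $ i)" using b1 by (simp add: field_simps)
        finally show ?thesis .
      qed
      define X where "X = B\<^sub>S * minv P\<^sub>\<alpha> * mat_adjoint B\<^sub>P"
      define Z where "Z = C\<^sub>S * minv P\<^sub>\<beta> * C\<^sub>P"
      have Xc: "X \<in> carrier_mat m m" unfolding X_def using BS Pai(1) BP by auto
      have Zc: "Z \<in> carrier_mat m m" unfolding Z_def using CSc Pbi(1) CPc by auto
      have Xy: "X *\<^sub>v y = t1" unfolding X_def t1_def bp_def
        using assoc_mult_mat_vec[OF mult_carrier_mat[OF BS Pai(1)] adj_carrier[OF BP] y]
          assoc_mult_mat_vec[OF BS Pai(1) adj_mult_carrier[OF BP y]] by simp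
      have Zy: "Z *\<^sub>v y = t3" unfolding Z_def t3_def cp_def
        using assoc_mult_mat_vec[OF mult_carrier_mat[OF CSc Pbi(1)] CPc y]
          assoc_mult_mat_vec[OF CSc Pbi(1) mult_mat_vec_carrier[OF CPc y]] by simp
      have My: "(P\<^sub>\<beta> - X + Z) *\<^sub>v y = pb - t1 + t3"
        unfolding add_mult_distrib_mat_vec[OF minus_carrier_mat[OF Xc] Zc y] minus_mult_distrib_mat_vec[OF Pbc Xc y]
          Xy Zy pb_def ..
      have Cy: "C *\<^sub>v y = cp + t2" unfolding splitC cp_def t2_def by (rule add_mult_distrib_mat_vec[OF CPc CSc y])
      define k where "k = (1 + a) / (1 - a)"
      have a1': "1 - a \<noteq> 0" using a1(2) by simp
      have k: "k = - (1 + b) / (1 - b)" unfolding k_def b_def using a0 a1' b1[unfolded b_def]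
        by (simp add: field_simps)
      have MyC: "(P\<^sub>\<beta> - X + Z) *\<^sub>v y = k \<cdot>\<^sub>v (C *\<^sub>v y)"
        unfolding My Cy k using key pbc t1c t2c t3c cpc by (intro eq_vecI) auto
      have CCh: "C + mat_adjoint C = C\<^sub>P + mat_adjoint C\<^sub>P"
      proof (rule eq_matI)
        fix i j assume ij: "i < dim_row (C\<^sub>P + mat_adjoint C\<^sub>P)" "j < dim_col (C\<^sub>P + mat_adjoint C\<^sub>P)"
        then have ij: "i < m" "j < m" using CPc by auto
        have "mat_adjoint C\<^sub>S $$ (i, j) = (- C\<^sub>S) $$ (i, j)" using CSk by simp
        then have "cnj (C\<^sub>S $$ (j, i)) = - C\<^sub>S $$ (i, j)" using ij CSc by simp
        then show "(C + mat_adjoint C) $$ (i, j) = (C\<^sub>P + mat_adjoint C\<^sub>P) $$ (i, j)"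
          unfolding splitC using ij CPc CSc by simp
      qed (use Cc CPc in auto)
      have CC0: "(C + mat_adjoint C) *\<^sub>v y = 0\<^sub>v m" unfolding CCh y_def by (rule Cy0)
      have spec: "a \<in> spectrum \<Gamma>" unfolding spectrum_def using ea by simp
      have cma: "cmod a = 1" using ca norm_ge_zero[of a] by (auto simp: power2_eq_1_iff)
      from cond[rule_format, OF spec, of y] cma a1(2) y y0 CC0
      have "((P\<^sub>\<beta> - X + Z) *\<^sub>v y) \<bullet>c y \<noteq> k * ((C *\<^sub>v y) \<bullet>c y)" unfolding X_def Z_def k_def by auto
      moreover have "((P\<^sub>\<beta> - X + Z) *\<^sub>v y) \<bullet>c y = k * ((C *\<^sub>v y) \<bullet>c y)"
        unfolding MyC by (rule cip_smult_left[of _ m]) (use Cc y in auto)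
      ultimately show False by simp
    qed
  qed
  obtain us where us: "us \<in> carrier_vec ?N" "\<A> *\<^sub>v us = b" using consistent by auto
  have bc: "b \<in> carrier_vec ?N" by (rule b)
  have cc: "c = 2 \<cdot>\<^sub>v (minv (\<Sigma> + \<S>) *\<^sub>v (\<Sigma> *\<^sub>v (minv (\<Sigma> + \<P>) *\<^sub>v b)))"
    unfolding c_def using Spi(1) Sgc Ppi(1) bc
    by (simp add: smult_mat_mult_vec[of _ ?N ?N] assoc_mult_mat_vec[of _ ?N ?N _ ?N])
  have ccar: "c \<in> carrier_vec ?N" unfolding cc using Spi(1) Sgc Ppi(1) bc by simp
  have fix1: "\<Gamma> *\<^sub>v us + c = us"
  proof -
    define z where "z = vv us"
    define w where "w = minv (\<Sigma> + \<P>) *\<^sub>v b"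
    have z: "z \<in> carrier_vec ?N" unfolding z_def by (rule vvc[OF us(1)])
    have w: "w \<in> carrier_vec ?N" unfolding w_def using Ppi(1) bc by simp
    have Ppz: "\<Sigma> *\<^sub>v z + \<P> *\<^sub>v z = \<Sigma> *\<^sub>v us - \<S> *\<^sub>v us"
      using Pp_vv[OF us(1)] unfolding z_def[symmetric] add_mult_distrib_mat_vec[OF Sgc Pc z]
        minus_mult_distrib_mat_vec[OF Sgc Sc us(1)] .
    have Ppw: "(\<Sigma> + \<P>) *\<^sub>v w = b" unfolding w_def by (rule minv_left(2)[OF Ppc Pp_inj bc])
    have bPS: "b = \<P> *\<^sub>v us + \<S> *\<^sub>v us" using us(2) unfolding AeqPS add_mult_distrib_mat_vec[OF Pc Sc us(1)] by simp
    have "(\<Sigma> + \<P>) *\<^sub>v (z + w) = (\<Sigma> + \<P>) *\<^sub>v us"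
    proof -
      have "(\<Sigma> + \<P>) *\<^sub>v (z + w) = (\<Sigma> *\<^sub>v z + \<P> *\<^sub>v z) + b"
        unfolding mult_add_distrib_mat_vec[OF Ppc z w] Ppw add_mult_distrib_mat_vec[OF Sgc Pc z] ..
      also have "\<dots> = \<Sigma> *\<^sub>v us + \<P> *\<^sub>v us" unfolding Ppz bPS using Sgc Sc Pc us(1)
        by (intro eq_vecI) auto
      also have "\<dots> = (\<Sigma> + \<P>) *\<^sub>v us" by (rule add_mult_distrib_mat_vec[OF Sgc Pc us(1), symmetric])
      finally show ?thesis .
    qed
    from inj_eq[OF Ppc Pp_inj _ us(1) this] z w have zw: "z + w = us" by simp
    have Sgw: "\<Sigma> *\<^sub>v w = \<Sigma> *\<^sub>v us - \<Sigma> *\<^sub>v z"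
    proof -
      have "w = us - z"
      proof (rule eq_vecI)
        fix i assume "i < dim_vec (us - z)"
        then have i: "i < ?N" using z by simp
        have "(z + w) $ i = us $ i" using zw by simp
        then show "w $ i = (us - z) $ i" using i z w us(1) by (simp add: algebra_simps)
      qed (use w us(1) z in simp)
      then show ?thesis using mult_minus_distrib_mat_vec[OF Sgc us(1) z] by simp
    qed
    have "(\<Sigma> + \<S>) *\<^sub>v (\<Gamma> *\<^sub>v us + c) = (\<Sigma> + \<S>) *\<^sub>v us"
    proof -
      have Spc_c: "(\<Sigma> + \<S>) *\<^sub>v c = 2 \<cdot>\<^sub>v (\<Sigma> *\<^sub>v w)" unfolding cc w_def
        using minv_left(2)[OF Spc Sp_inj, of "\<Sigma> *\<^sub>v (minv (\<Sigma> + \<P>) *\<^sub>v b)"] Sgc Ppi(1) bc Spi(1)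
        by (simp add: mult_mat_vec[OF Spc])
      have "(\<Sigma> + \<S>) *\<^sub>v (\<Gamma> *\<^sub>v us + c) = (\<Sigma> *\<^sub>v z - \<P> *\<^sub>v z) + 2 \<cdot>\<^sub>v (\<Sigma> *\<^sub>v w)"
        unfolding mult_add_distrib_mat_vec[OF Spc mult_mat_vec_carrier[OF Gc us(1)] ccar] Sp_G[OF us(1)] Spc_c
          z_def[symmetric] minus_mult_distrib_mat_vec[OF Sgc Pc z] ..
      also have "\<dots> = \<Sigma> *\<^sub>v us + \<S> *\<^sub>v us"
      proof (rule eq_vecI)
        fix i assume "i < dim_vec (\<Sigma> *\<^sub>v us + \<S> *\<^sub>v us)"
        then have i: "i < ?N" using Sc by simp
        have "(\<Sigma> *\<^sub>v z + \<P> *\<^sub>v z) $ i = (\<Sigma> *\<^sub>v us - \<S> *\<^sub>v us) $ i" using Ppz by simp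
        then have h: "(\<Sigma> *\<^sub>v z) $ i + (\<P> *\<^sub>v z) $ i = (\<Sigma> *\<^sub>v us) $ i - (\<S> *\<^sub>v us) $ i"
          using i Sgc Pc Sc by simp
        have "(\<Sigma> *\<^sub>v z - \<P> *\<^sub>v z + 2 \<cdot>\<^sub>v (\<Sigma> *\<^sub>v us - \<Sigma> *\<^sub>v z)) $ i
          = 2 * (\<Sigma> *\<^sub>v us) $ i - ((\<Sigma> *\<^sub>v z) $ i + (\<P> *\<^sub>v z) $ i)"
          using i Sgc Pc by (simp add: algebra_simps)
        also have "\<dots> = (\<Sigma> *\<^sub>v us + \<S> *\<^sub>v us) $ i" unfolding h using i Sgc Sc by simp
        finally show "(\<Sigma> *\<^sub>v z - \<P> *\<^sub>v z + 2 \<cdot>\<^sub>v (\<Sigma> *\<^sub>v w)) $ i = (\<Sigma> *\<^sub>v us + \<S> *\<^sub>v us) $ i"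
          unfolding Sgw .
      qed (use Sgc Pc Sc in simp)
      also have "\<dots> = (\<Sigma> + \<S>) *\<^sub>v us" by (rule add_mult_distrib_mat_vec[OF Sgc Sc us(1), symmetric])
      finally show ?thesis .
    qed
    from inj_eq[OF Spc Sp_inj _ us(1) this] show ?thesis using Gc us(1) ccar by simp
  qed
  have fixL: "\<A> *\<^sub>v L = 0\<^sub>v ?N" if L: "L \<in> carrier_vec ?N" and GL: "\<Gamma> *\<^sub>v L = L" for L
  proof -
    define z where "z = vv L"
    have z: "z \<in> carrier_vec ?N" unfolding z_def by (rule vvc[OF L])
    have e1: "\<Sigma> *\<^sub>v z + \<P> *\<^sub>v z = \<Sigma> *\<^sub>v L - \<S> *\<^sub>v L"
      using Pp_vv[OF L] unfolding z_def[symmetric] add_mult_distrib_mat_vec[OF Sgc Pc z]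
        minus_mult_distrib_mat_vec[OF Sgc Sc L] .
    have e2: "\<Sigma> *\<^sub>v L + \<S> *\<^sub>v L = \<Sigma> *\<^sub>v z - \<P> *\<^sub>v z"
      using Sp_G[OF L] unfolding z_def[symmetric] GL add_mult_distrib_mat_vec[OF Sgc Sc L]
        minus_mult_distrib_mat_vec[OF Sgc Pc z] .
    have comp: "(\<Sigma> *\<^sub>v z) $ i + (\<P> *\<^sub>v z) $ i = (\<Sigma> *\<^sub>v L) $ i - (\<S> *\<^sub>v L) $ i"
      "(\<Sigma> *\<^sub>v L) $ i + (\<S> *\<^sub>v L) $ i = (\<Sigma> *\<^sub>v z) $ i - (\<P> *\<^sub>v z) $ i" if i: "i < ?N" for i
      using arg_cong[OF e1, of "\<lambda>v. v $ i"] arg_cong[OF e2, of "\<lambda>v. v $ i"] i Sgc Pc Sc by auto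
    have "\<Sigma> *\<^sub>v L = \<Sigma> *\<^sub>v z"
    proof (rule eq_vecI)
      fix i assume "i < dim_vec (\<Sigma> *\<^sub>v z)"
      then have i: "i < ?N" using Sgc by simp
      show "(\<Sigma> *\<^sub>v L) $ i = (\<Sigma> *\<^sub>v z) $ i" by (rule aux2[OF comp(1)[OF i] comp(2)[OF i]])
    qed (use Sgc in simp)
    from inj_eq[OF Sgc Sg_inj L z this] have Lz: "L = z" .
    have "\<A> *\<^sub>v L = \<P> *\<^sub>v L + \<S> *\<^sub>v L" unfolding AeqPS by (rule add_mult_distrib_mat_vec[OF Pc Sc L])
    also have "\<dots> = 0\<^sub>v ?N"
    proof (rule eq_vecI)
      fix i assume "i < dim_vec (0\<^sub>v ?N :: complex vec)"
      then have i: "i < ?N" by simp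
      from comp[OF i] Lz show "(\<P> *\<^sub>v L + \<S> *\<^sub>v L) $ i = 0\<^sub>v ?N $ i" using i Pc Sc by (simp add: algebra_simps)
    qed (use Pc Sc in simp)
    finally show ?thesis .
  qed
  show ?thesis
  proof (intro ballI)
    fix u0 :: "complex vec" assume u0: "u0 \<in> carrier_vec ?N"
    define x where "x = u0 - us"
    have x: "x \<in> carrier_vec ?N" unfolding x_def using u0 us(1) by simp
    from conv_main[OF Gc ev ss x] obtain L where L: "L \<in> carrier_vec ?N" "\<Gamma> *\<^sub>v L = L"
      and lim: "\<forall>i<?N. (\<lambda>k. itv \<Gamma> k x $ i) \<longlonglongrightarrow> L $ i" by blast
    have it: "lin_iter \<Gamma> c u0 k = itv \<Gamma> k x + us" for k
    proof (induct k)
      case 0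
      show ?case unfolding lin_iter_def x_def itv_0[OF Gc] using u0 us(1) by (intro eq_vecI) auto
    next
      case (Suc k)
      have xk: "itv \<Gamma> k x \<in> carrier_vec ?N" using itv_carrier[OF Gc x] .
      have "lin_iter \<Gamma> c u0 (Suc k) = \<Gamma> *\<^sub>v lin_iter \<Gamma> c u0 k + c" unfolding lin_iter_def by simp
      also have "\<dots> = \<Gamma> *\<^sub>v itv \<Gamma> k x + (\<Gamma> *\<^sub>v us + c)" unfolding Suc mult_add_distrib_mat_vec[OF Gc xk us(1)]
        using Gc xk us(1) ccar by (intro eq_vecI) auto
      also have "\<dots> = itv \<Gamma> (Suc k) x + us" unfolding fix1 itv_Suc[OF Gc] ..
      finally show ?case .
    qed
    show "\<exists>u \<in> carrier_vec ?N. \<A> *\<^sub>v u = b \<and> (\<forall>i < ?N. (\<lambda>k. lin_iter \<Gamma> c u0 k $ i) \<longlonglongrightarrow> u $ i)"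
    proof (intro bexI conjI allI impI)
      show "\<A> *\<^sub>v (L + us) = b" unfolding mult_add_distrib_mat_vec[OF Ac' L(1) us(1)] fixL[OF L] us(2)
        using bc by simp
      fix i assume i: "i < ?N"
      have "(\<lambda>k. itv \<Gamma> k x $ i + us $ i) \<longlonglongrightarrow> L $ i + us $ i"
        using lim i by (intro tendsto_add tendsto_const) auto
      moreover have "lin_iter \<Gamma> c u0 k $ i = itv \<Gamma> k x $ i + us $ i" for k
        unfolding it using i itv_carrier[OF Gc x, of k] us(1) by simp
      ultimately show "(\<lambda>k. lin_iter \<Gamma> c u0 k $ i) \<longlonglongrightarrow> (L + us) $ i" using i L(1) us(1) by simp
    qed (use L(1) us(1) in simp)
  qed
qed

end
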